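(* Let $\mathcal H:\mathbb{R}^d\to\mathbb{R}^d$ satisfy $\|\mathcal H(x)-\mathcal H(y)\|_2\le\|x-y\|_2$ for all $x,y$, and suppose its fixed-point set $\mathcal X$ is non-empty and bounded. Fix a deterministic $x_0$, and let $x_{k+1}=x_k+\epsilon_k(\mathcal H(x_k)-x_k+w_k)$ with positive stepsizes, where, with $\mathcal F_k$ the $\sigma$-algebra generated by $x_0,w_0,\dots,x_{k-1},w_{k-1},x_k$, $\mathbb{E}[w_k\mid\mathcal F_k]=0$ and $\mathbb{E}[\|w_k\|_2^2\mid\mathcal F_k]\le A$ for a constant $A>0$. Let $\mathrm{dist}(x,\mathcal X)=\inf_{x^*\in\mathcal X}\|x-x^*\|_2$ and $D=\sup_{x^*\in\mathcal X}\|x_0-x^*\|_2$. Then: (a) if $\sum_k\epsilon_k=\infty$ and $\sum_k\epsilon_k^2<\infty$, then $\mathrm{dist}(x_k,\mathcal X)\to0$ almost surely; (b) if $\epsilon_k\equiv\epsilon\in(0,1)$, then for all $k\ge0$, $\min_{0\le i\le k}\mathbb{E}[\|\mathcal H(x_i)-x_i\|_2^2]\le\frac{D^2}{(k+1)(1-\epsilon)\epsilon}+\frac{A\epsilon}{1-\epsilon}$; (c) if $\epsilon_k=\epsilon/\sqrt{k+1}$ with $\epsilon\in(0,1)$, then for all $k\ge1$, $\min_{0\le i\le k}\mathbb{E}[\|\mathcal H(x_i)-x_i\|_2^2]\le\frac{D^2+A\epsilon^2(1+\log k)}{2(1-\epsilon)\epsilon((k+1)^{1/2}-1)}$; (d)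 if $\epsilon_k=\epsilon/(k+1)$ with $\epsilon\in(0,1)$, then for all $k\ge1$, $\min_{0\le i\le k}\mathbb{E}[\|\mathcal H(x_i)-x_i\|_2^2]\le\frac{D^2+2A\epsilon^2}{(1-\epsilon)\epsilon}\frac{1}{\log(k+1)}$.
   Context: $\|\cdot\|_2$ is the Euclidean norm on $\mathbb{R}^d$. *)

theory Defs
  imports "HOL-Probability.Probability"
begin

definition nat_filtration ::
  "'a measure \<Rightarrow> (nat \<Rightarrow> 'a \<Rightarrow> 'v::topological_space) \<Rightarrow> (nat \<Rightarrow> 'a \<Rightarrow> 'v) \<Rightarrow> nat \<Rightarrow> 'a measure" where
  "nat_filtration M x w k =
     sigma (space M)
       ((\<Union>j\<in>{..k}. {x j -` B \<inter> space M | B. B \<in> sets borel}) \<union>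
        (\<Union>j\<in>{..<k}. {w j -` B \<inter> space M | B. B \<in> sets borel}))"

end

theory Submission
  imports Defs
begin


locale km =
  fixes M :: "'a measure"
    and H :: "'v::euclidean_space \<Rightarrow> 'v"
    and x0 :: 'v
    and eps :: "nat \<Rightarrow> real"
    and w x :: "nat \<Rightarrow> 'a \<Rightarrow> 'v"
    and A :: real
  assumes M: "prob_space M"
    and nonexp: "\<And>u v. norm (H u - H v) \<le> norm (u - v)"
    and eps_pos: "\<And>k. eps k > 0"
    and w_meas: "\<And>k. w k \<in> borel_measurable M"
    and x_0: "x 0 = (\<lambda>\<omega>. x0)"
    and x_Suc: "\<And>k \<omega>. x (Suc k) \<omega> = x k \<omega> + eps k *\<^sub>R (H (x k \<omega>) - x k \<omega> + w k \<omega>)"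
    and w_mean: "\<And>k b. b \<in> Basis \<Longrightarrow>
        AE \<omega> in M. real_cond_exp M (nat_filtration M x w k) (\<lambda>\<eta>. w k \<eta> \<bullet> b) \<omega> = 0"
    and w_var: "\<And>k. AE \<omega> in M.
        nn_cond_exp M (nat_filtration M x w k) (\<lambda>\<eta>. ennreal ((norm (w k \<eta>))\<^sup>2)) \<omega> \<le> ennreal A"
    and A_pos: "A > 0"
begin

sublocale prob_space M by (rule M)

abbreviation "F k \<equiv> nat_filtration M x w k"

definition "G k = ((\<Union>j\<in>{..k}. {x j -` B \<inter> space M | B. B \<in> sets (borel::'v measure)}) \<union>
        (\<Union>j\<in>{..<k}. {w j -` B \<inter> space M | B. B \<in> sets (borel::'v measure)}))"

lemma G_pow: "G k \<subseteq> Pow (space M)" unfolding G_def by auto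

lemma space_F: "space (F k) = space M"
  unfolding nat_filtration_def by (simp add: space_measure_of_conv)

lemma sets_F: "sets (F k) = sigma_sets (space M) (G k)"
  unfolding nat_filtration_def G_def[symmetric] using G_pow by (simp add: sets_measure_of)

lemma H_cont: "continuous_on UNIV H"
proof -
  have "lipschitz_on 1 UNIV H"
    by (rule lipschitz_onI) (auto simp: dist_norm nonexp)
  then show ?thesis by (rule lipschitz_on_continuous_on)
qed

lemma H_meas[measurable]: "H \<in> borel_measurable borel"
  using H_cont by (rule borel_measurable_continuous_onI)

lemma x_meas[measurable]: "x k \<in> borel_measurable M"
proof (induction k)
  case 0 then show ?case by (simp add: x_0)
next
  case (Suc k)
  have "x (Suc k) = (\<lambda>\<omega>. x k \<omega> + eps k *\<^sub>R (H (x k \<omega>) - x k \<omega> + w k \<omega>))"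
    using x_Suc by auto
  also have "\<dots> \<in> borel_measurable M" using Suc w_meas[of k] by measurable
  finally show ?case .
qed

lemma G_sets: "G k \<subseteq> sets M"
proof -
  have "\<And>j B. B \<in> sets borel \<Longrightarrow> x j -` B \<inter> space M \<in> sets M"
    by (rule measurable_sets[OF x_meas])
  moreover have "\<And>j B. B \<in> sets borel \<Longrightarrow> w j -` B \<inter> space M \<in> sets M"
    by (rule measurable_sets[OF w_meas])
  ultimately show ?thesis unfolding G_def by blast
qed

lemma subalg: "subalgebra M (F k)"
  unfolding subalgebra_def space_F sets_F
  using G_sets by (simp add: sets.sigma_sets_subset)

lemma sfs: "sigma_finite_subalgebra M (F k)"
  by (rule finite_measure_subalgebra_is_sigma_finite)
       (simp add: finite_measure_subalgebra_def finite_measure_axioms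
                  finite_measure_subalgebra_axioms_def subalg)

lemma meas_F_mono:
  assumes "j \<le> k" "f \<in> borel_measurable (F j)"
  shows "f \<in> borel_measurable (F k)"
proof -
  have "G j \<subseteq> G k" using assms(1) unfolding G_def
    by (intro Un_mono UN_mono) auto
  then have "sets (F j) \<subseteq> sets (F k)" unfolding sets_F by (rule sigma_sets_mono')
  then show ?thesis using assms(2) measurable_mono[of "borel" "borel" "F j" "F k"] space_F by auto
qed

lemma gen_meas:
  assumes "\<And>B. B \<in> sets (borel::'v measure) \<Longrightarrow> f -` B \<inter> space M \<in> G k"
  shows "f \<in> borel_measurable (F k)"
proof (rule measurableI)
  fix B :: "'v set" assume "B \<in> sets borel"
  then have "f -` B \<inter> space M \<in> G k" by (rule assms)
  then show "f -` B \<inter> space (F k) \<in> sets (F k)"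
    unfolding space_F sets_F by (rule sigma_sets.Basic)
qed simp

lemma x_F[measurable]: "j \<le> k \<Longrightarrow> x j \<in> borel_measurable (F k)"
  by (rule gen_meas) (auto simp: G_def)

lemma w_F[measurable]: "j < k \<Longrightarrow> w j \<in> borel_measurable (F k)"
  by (rule gen_meas) (auto simp: G_def)

end


lemma le_one_plus_sq: "(t::real) \<le> 1 + t\<^sup>2"
proof -
  have "0 \<le> (t - 1)\<^sup>2" by simp
  then have "0 \<le> t\<^sup>2 - 2 * t + 1" by (simp add: power2_eq_square algebra_simps)
  moreover have "0 \<le> t\<^sup>2" by simp
  ultimately show ?thesis by linarith
qed

context km begin

lemma w_nn_bound:
  assumes fm: "f \<in> borel_measurable (F k)"
  shows "(\<integral>\<^sup>+ \<omega>. f \<omega> * ennreal ((norm (w k \<omega>))\<^sup>2) \<partial>M) \<le> ennreal A * (\<integral>\<^sup>+ \<omega>. f \<omega> \<partial>M)"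
proof -
  interpret S: sigma_finite_subalgebra M "F k" by (rule sfs)
  have fM: "f \<in> borel_measurable M" by (rule measurable_from_subalg[OF subalg fm])
  have "(\<integral>\<^sup>+ \<omega>. f \<omega> * ennreal ((norm (w k \<omega>))\<^sup>2) \<partial>M)
      = (\<integral>\<^sup>+ \<omega>. f \<omega> * nn_cond_exp M (F k) (\<lambda>\<eta>. ennreal ((norm (w k \<eta>))\<^sup>2)) \<omega> \<partial>M)"
    by (rule S.nn_cond_exp_intg[symmetric]) (use fm w_meas in auto)
  also have "\<dots> \<le> (\<integral>\<^sup>+ \<omega>. f \<omega> * ennreal A \<partial>M)"
  proof (rule nn_integral_mono_AE)
    show "AE \<omega> in M. f \<omega> * nn_cond_exp M (F k) (\<lambda>\<eta>. ennreal ((norm (w k \<eta>))\<^sup>2)) \<omega> \<le> f \<omega> * ennreal A"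
      using w_var[of k] by (rule AE_mp) (intro AE_I2 impI mult_left_mono, auto)
  qed
  also have "\<dots> = ennreal A * (\<integral>\<^sup>+ \<omega>. f \<omega> \<partial>M)"
    using fM by (subst nn_integral_cmult[symmetric]) (auto simp: mult.commute)
  finally show ?thesis .
qed

lemma w_sq_int: "integrable M (\<lambda>\<omega>. (norm (w k \<omega>))\<^sup>2)"
proof -
  have "(\<integral>\<^sup>+ \<omega>. 1 * ennreal ((norm (w k \<omega>))\<^sup>2) \<partial>M) \<le> ennreal A * (\<integral>\<^sup>+ \<omega>. 1 \<partial>M)"
    by (rule w_nn_bound) simp
  also have "\<dots> < \<infinity>" by (simp add: emeasure_space_1 ennreal_mult_less_top)
  finally have "(\<integral>\<^sup>+ \<omega>. ennreal (norm ((norm (w k \<omega>))\<^sup>2)) \<partial>M) < \<infinity>" by simp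
  then show ?thesis by (intro integrableI_bounded) (use w_meas[of k] in auto)
qed

lemma w_sq_exp: "(\<integral>\<omega>. (norm (w k \<omega>))\<^sup>2 \<partial>M) \<le> A"
proof -
  have "(\<integral>\<^sup>+ \<omega>. 1 * ennreal ((norm (w k \<omega>))\<^sup>2) \<partial>M) \<le> ennreal A * (\<integral>\<^sup>+ \<omega>. 1 \<partial>M)"
    by (rule w_nn_bound) simp
  then have "ennreal (\<integral>\<omega>. (norm (w k \<omega>))\<^sup>2 \<partial>M) \<le> ennreal A"
    using w_sq_int[of k] by (simp add: nn_integral_eq_integral emeasure_space_1)
  then show ?thesis using A_pos by simp
qed

lemma real_weighted_bound:
  assumes fm: "f \<in> borel_measurable (F k)" and fpos: "\<And>\<omega>. f \<omega> \<ge> 0" and fi: "integrable M f"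
  shows "integrable M (\<lambda>\<omega>. f \<omega> * (norm (w k \<omega>))\<^sup>2)"
    and "(\<integral>\<omega>. f \<omega> * (norm (w k \<omega>))\<^sup>2 \<partial>M) \<le> A * (\<integral>\<omega>. f \<omega> \<partial>M)"
proof -
  have fM: "f \<in> borel_measurable M" by (rule measurable_from_subalg[OF subalg fm])
  have "(\<integral>\<^sup>+ \<omega>. ennreal (f \<omega>) * ennreal ((norm (w k \<omega>))\<^sup>2) \<partial>M) \<le> ennreal A * (\<integral>\<^sup>+ \<omega>. ennreal (f \<omega>) \<partial>M)"
    by (rule w_nn_bound) (use fm in auto)
  moreover have "(\<integral>\<^sup>+ \<omega>. ennreal (f \<omega>) \<partial>M) = ennreal (\<integral>\<omega>. f \<omega> \<partial>M)"
    using fi fpos by (simp add: nn_integral_eq_integral)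
  ultimately have le: "(\<integral>\<^sup>+ \<omega>. ennreal (f \<omega> * (norm (w k \<omega>))\<^sup>2) \<partial>M) \<le> ennreal (A * (\<integral>\<omega>. f \<omega> \<partial>M))"
    using fpos A_pos by (simp add: ennreal_mult' ennreal_mult)
  then have "(\<integral>\<^sup>+ \<omega>. ennreal (norm (f \<omega> * (norm (w k \<omega>))\<^sup>2)) \<partial>M) < \<infinity>"
    using fpos by (simp add: abs_mult order.strict_trans1)
  then show ii: "integrable M (\<lambda>\<omega>. f \<omega> * (norm (w k \<omega>))\<^sup>2)"
    by (intro integrableI_bounded) (use w_meas[of k] fM in auto)
  have "ennreal (\<integral>\<omega>. f \<omega> * (norm (w k \<omega>))\<^sup>2 \<partial>M) = (\<integral>\<^sup>+ \<omega>. ennreal (f \<omega> * (norm (w k \<omega>))\<^sup>2) \<partial>M)"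
    using ii fpos by (simp add: nn_integral_eq_integral)
  with le have "ennreal (\<integral>\<omega>. f \<omega> * (norm (w k \<omega>))\<^sup>2 \<partial>M) \<le> ennreal (A * (\<integral>\<omega>. f \<omega> \<partial>M))" by simp
  moreover have "0 \<le> A * (\<integral>\<omega>. f \<omega> \<partial>M)" using A_pos fpos by simp
  ultimately show "(\<integral>\<omega>. f \<omega> * (norm (w k \<omega>))\<^sup>2 \<partial>M) \<le> A * (\<integral>\<omega>. f \<omega> \<partial>M)"
    by (simp add: ennreal_le_iff)
qed

lemma orth:
  fixes U :: "'a \<Rightarrow> 'v"
  assumes Um: "U \<in> borel_measurable (F k)" and Ui: "integrable M (\<lambda>\<omega>. norm (U \<omega>))"
  shows "integrable M (\<lambda>\<omega>. U \<omega> \<bullet> w k \<omega>)" and "(\<integral>\<omega>. U \<omega> \<bullet> w k \<omega> \<partial>M) = 0"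
proof -
  interpret S: sigma_finite_subalgebra M "F k" by (rule sfs)
  have UM: "U \<in> borel_measurable M" by (rule measurable_from_subalg[OF subalg Um])
  have i2: "integrable M (\<lambda>\<omega>. norm (U \<omega>) * (norm (w k \<omega>))\<^sup>2)"
    by (rule real_weighted_bound(1)) (use Um Ui in auto)
  have iuw: "integrable M (\<lambda>\<omega>. norm (U \<omega>) * norm (w k \<omega>))"
  proof (rule Bochner_Integration.integrable_bound[OF Bochner_Integration.integrable_add[OF Ui i2]])
    show "(\<lambda>\<omega>. norm (U \<omega>) * norm (w k \<omega>)) \<in> borel_measurable M" using UM w_meas[of k] by measurable
    show "AE \<omega> in M. norm (norm (U \<omega>) * norm (w k \<omega>)) \<le> norm (norm (U \<omega>) + norm (U \<omega>) * (norm (w k \<omega>))\<^sup>2)"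
    proof (rule AE_I2)
      fix \<omega>
      have "norm (w k \<omega>) \<le> 1 + (norm (w k \<omega>))\<^sup>2"
        by (rule le_one_plus_sq)
      then have "norm (U \<omega>) * norm (w k \<omega>) \<le> norm (U \<omega>) * (1 + (norm (w k \<omega>))\<^sup>2)"
        by (intro mult_left_mono) auto
      then show "norm (norm (U \<omega>) * norm (w k \<omega>)) \<le> norm (norm (U \<omega>) + norm (U \<omega>) * (norm (w k \<omega>))\<^sup>2)"
        by (simp add: algebra_simps)
    qed
  qed
  have ib: "integrable M (\<lambda>\<omega>. (U \<omega> \<bullet> b) * (w k \<omega> \<bullet> b))" if b: "b \<in> Basis" for b
  proof (rule Bochner_Integration.integrable_bound[OF iuw])
    show "(\<lambda>\<omega>. (U \<omega> \<bullet> b) * (w k \<omega> \<bullet> b)) \<in> borel_measurable M" using UM w_meas[of k] by measurable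
    show "AE \<omega> in M. norm ((U \<omega> \<bullet> b) * (w k \<omega> \<bullet> b)) \<le> norm (norm (U \<omega>) * norm (w k \<omega>))"
      using b by (auto simp: abs_mult intro!: mult_mono Basis_le_norm)
  qed
  have z: "(\<integral>\<omega>. (U \<omega> \<bullet> b) * (w k \<omega> \<bullet> b) \<partial>M) = 0" if b: "b \<in> Basis" for b
  proof -
    have "(\<integral>\<omega>. (U \<omega> \<bullet> b) * (w k \<omega> \<bullet> b) \<partial>M)
        = (\<integral>\<omega>. (U \<omega> \<bullet> b) * real_cond_exp M (F k) (\<lambda>\<eta>. w k \<eta> \<bullet> b) \<omega> \<partial>M)"
      by (rule S.real_cond_exp_intg(2)[symmetric]) (use ib[OF b] Um w_meas[of k] in auto)
    also have "\<dots> = (\<integral>\<omega>. 0 \<partial>M)"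
      by (rule integral_cong_AE) (use w_mean[OF b, of k] UM in auto)
    finally show ?thesis by simp
  qed
  have eq: "(\<lambda>\<omega>. U \<omega> \<bullet> w k \<omega>) = (\<lambda>\<omega>. \<Sum>b\<in>Basis. (U \<omega> \<bullet> b) * (w k \<omega> \<bullet> b))"
    by (rule ext, rule euclidean_inner)
  show "integrable M (\<lambda>\<omega>. U \<omega> \<bullet> w k \<omega>)" unfolding eq using ib by auto
  show "(\<integral>\<omega>. U \<omega> \<bullet> w k \<omega> \<partial>M) = 0" unfolding eq
    by (subst Bochner_Integration.integral_sum) (use ib z in auto)
qed

end


lemma ab_le_sq: "(a::real) * b \<le> a\<^sup>2 + b\<^sup>2"
proof -
  have "0 \<le> (a - b)\<^sup>2" by simp
  then have "0 \<le> a\<^sup>2 - 2 * (a * b) + b\<^sup>2" by (simp add: power2_eq_square algebra_simps)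
  moreover have "0 \<le> a\<^sup>2" "0 \<le> b\<^sup>2" by simp_all
  ultimately show ?thesis by linarith
qed

context km begin

definition "adapted c \<longleftrightarrow> (\<forall>k. c k \<in> borel_measurable (F k) \<and> integrable M (\<lambda>\<omega>. (norm (c k \<omega>))\<^sup>2))"

definition "S c n \<omega> = (\<Sum>k<n. c k \<omega> \<bullet> w k \<omega>)"

lemma adaptedD:
  assumes "adapted c"
  shows "c k \<in> borel_measurable (F k)" "integrable M (\<lambda>\<omega>. (norm (c k \<omega>))\<^sup>2)"
    "c k \<in> borel_measurable M"
  using assms measurable_from_subalg[OF subalg] unfolding adapted_def by auto

lemma S_Fmeas:
  assumes "adapted c" and "n \<le> N"
  shows "S c n \<in> borel_measurable (F N)"
proof -
  have "(\<lambda>\<omega>. c k \<omega> \<bullet> w k \<omega>) \<in> borel_measurable (F N)" if "k < n" for k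
  proof -
    have [measurable]: "c k \<in> borel_measurable (F N)"
      using meas_F_mono[OF _ adaptedD(1)[OF assms(1)], of k N] that assms(2) by simp
    have [measurable]: "w k \<in> borel_measurable (F N)" using w_F that assms(2) by simp
    show ?thesis by measurable
  qed
  then show ?thesis unfolding S_def[abs_def] by (intro borel_measurable_sum) auto
qed

lemma S_meas[measurable]:
  assumes "adapted c"
  shows "S c n \<in> borel_measurable M"
  using measurable_from_subalg[OF subalg S_Fmeas[OF assms order.refl]] .

lemma sq_bound:
  assumes ad: "adapted c"
  shows "integrable M (\<lambda>\<omega>. (S c n \<omega>)\<^sup>2) \<and>
         (\<integral>\<omega>. (S c n \<omega>)\<^sup>2 \<partial>M) \<le> A * (\<Sum>k<n. \<integral>\<omega>. (norm (c k \<omega>))\<^sup>2 \<partial>M)"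
proof (induction n)
  case 0 then show ?case by (simp add: S_def)
next
  case (Suc n)
  note cm = adaptedD[OF ad, of n]
  have [measurable]: "c n \<in> borel_measurable M" by (rule cm(3))
  have [measurable]: "S c n \<in> borel_measurable M" using ad by measurable
  have wm[measurable]: "w n \<in> borel_measurable M" by (rule w_meas)
  let ?eta = "\<lambda>\<omega>. c n \<omega> \<bullet> w n \<omega>"
  have cw: "integrable M (\<lambda>\<omega>. (norm (c n \<omega>))\<^sup>2 * (norm (w n \<omega>))\<^sup>2)"
    and cwle: "(\<integral>\<omega>. (norm (c n \<omega>))\<^sup>2 * (norm (w n \<omega>))\<^sup>2 \<partial>M) \<le> A * (\<integral>\<omega>. (norm (c n \<omega>))\<^sup>2 \<partial>M)"
    using real_weighted_bound[of "\<lambda>\<omega>. (norm (c n \<omega>))\<^sup>2" n] cm by auto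
  have etale: "(?eta \<omega>)\<^sup>2 \<le> (norm (c n \<omega>))\<^sup>2 * (norm (w n \<omega>))\<^sup>2" for \<omega>
  proof -
    have "\<bar>?eta \<omega>\<bar> \<le> norm (c n \<omega>) * norm (w n \<omega>)" by (rule Cauchy_Schwarz_ineq2)
    then have "\<bar>?eta \<omega>\<bar>\<^sup>2 \<le> (norm (c n \<omega>) * norm (w n \<omega>))\<^sup>2"
      by (intro power_mono) auto
    then show ?thesis by (simp add: power_mult_distrib)
  qed
  have ie: "integrable M (\<lambda>\<omega>. (?eta \<omega>)\<^sup>2)"
    by (rule Bochner_Integration.integrable_bound[OF cw]) (use etale in auto)
  have ie_le: "(\<integral>\<omega>. (?eta \<omega>)\<^sup>2 \<partial>M) \<le> A * (\<integral>\<omega>. (norm (c n \<omega>))\<^sup>2 \<partial>M)"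
    using integral_mono[OF ie cw etale] cwle by linarith
  have Sint: "integrable M (\<lambda>\<omega>. (S c n \<omega>)\<^sup>2)" using Suc by simp
  let ?U = "\<lambda>\<omega>. S c n \<omega> *\<^sub>R c n \<omega>"
  have Um: "?U \<in> borel_measurable (F n)"
  proof -
    have [measurable]: "S c n \<in> borel_measurable (F n)" by (rule S_Fmeas[OF ad order.refl])
    have [measurable]: "c n \<in> borel_measurable (F n)" by (rule cm(1))
    show ?thesis by measurable
  qed
  have Ui: "integrable M (\<lambda>\<omega>. norm (?U \<omega>))"
  proof (rule Bochner_Integration.integrable_bound[OF Bochner_Integration.integrable_add[OF Sint cm(2)]])
    show "(\<lambda>\<omega>. norm (?U \<omega>)) \<in> borel_measurable M" by measurable
    show "AE \<omega> in M. norm (norm (?U \<omega>)) \<le> norm ((S c n \<omega>)\<^sup>2 + (norm (c n \<omega>))\<^sup>2)"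
    proof (rule AE_I2)
      fix \<omega>
      have "\<bar>S c n \<omega>\<bar> * norm (c n \<omega>) \<le> (S c n \<omega>)\<^sup>2 + (norm (c n \<omega>))\<^sup>2"
        using ab_le_sq[of "\<bar>S c n \<omega>\<bar>" "norm (c n \<omega>)"] by simp
      then show "norm (norm (?U \<omega>)) \<le> norm ((S c n \<omega>)\<^sup>2 + (norm (c n \<omega>))\<^sup>2)" by simp
    qed
  qed
  note o = orth[OF Um Ui]
  have eqU: "?U \<omega> \<bullet> w n \<omega> = S c n \<omega> * ?eta \<omega>" for \<omega> by simp
  have oi: "integrable M (\<lambda>\<omega>. S c n \<omega> * ?eta \<omega>)" using o(1) by (simp only: eqU)
  have o0: "(\<integral>\<omega>. S c n \<omega> * ?eta \<omega> \<partial>M) = 0" using o(2) by (simp only: eqU)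
  have expand: "(S c (Suc n) \<omega>)\<^sup>2 = (S c n \<omega>)\<^sup>2 + 2 * (S c n \<omega> * ?eta \<omega>) + (?eta \<omega>)\<^sup>2" for \<omega>
    by (simp add: S_def power2_eq_square algebra_simps)
  have i1: "integrable M (\<lambda>\<omega>. (S c n \<omega>)\<^sup>2 + 2 * (S c n \<omega> * ?eta \<omega>) + (?eta \<omega>)\<^sup>2)"
    using Sint oi ie by auto
  have "(\<integral>\<omega>. (S c (Suc n) \<omega>)\<^sup>2 \<partial>M)
      = (\<integral>\<omega>. (S c n \<omega>)\<^sup>2 \<partial>M) + 2 * (\<integral>\<omega>. S c n \<omega> * ?eta \<omega> \<partial>M) + (\<integral>\<omega>. (?eta \<omega>)\<^sup>2 \<partial>M)"
    unfolding expand using Sint oi ie by simp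
  also have "\<dots> \<le> A * (\<Sum>k<n. \<integral>\<omega>. (norm (c k \<omega>))\<^sup>2 \<partial>M) + A * (\<integral>\<omega>. (norm (c n \<omega>))\<^sup>2 \<partial>M)"
    using Suc ie_le o0 by linarith
  also have "\<dots> = A * (\<Sum>k<Suc n. \<integral>\<omega>. (norm (c k \<omega>))\<^sup>2 \<partial>M)" by (simp add: algebra_simps)
  finally show ?case using i1 unfolding expand by simp
qed

end


context km begin

lemma S_diff: "m \<le> j \<Longrightarrow> S c j \<omega> - S c m \<omega> = (\<Sum>k\<in>{m..<j}. c k \<omega> \<bullet> w k \<omega>)"
  unfolding S_def by (metis sum_diff_nat_ivl lessThan_atLeast0 le0)

lemma maxineq:
  assumes ad: "adapted c" and lam: "l > 0"
  shows "measure M {\<omega>\<in>space M. \<exists>j\<in>{m..n}. l \<le> \<bar>S c j \<omega> - S c m \<omega>\<bar>}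
         \<le> A * (\<Sum>k\<in>{m..<n}. \<integral>\<omega>. (norm (c k \<omega>))\<^sup>2 \<partial>M) / l\<^sup>2"
proof -
  have Sm[measurable]: "\<And>j. S c j \<in> borel_measurable M" using S_meas[OF ad] .
  define E where "E = {\<omega>\<in>space M. \<exists>j\<in>{m..n}. l \<le> \<bar>S c j \<omega> - S c m \<omega>\<bar>}"
  have Esets: "E \<in> sets M" unfolding E_def by measurable
  define Gs where "Gs k = {\<omega> \<in> space M. \<forall>j\<in>{m..k}. \<bar>S c j \<omega> - S c m \<omega>\<bar> < l}" for k
  have Gs_sets: "Gs k \<in> sets (F k)" for k
  proof (cases "m \<le> k")
    case False
    then have "Gs k = space (F k)" unfolding Gs_def space_F by auto
    then show ?thesis by simp
  next
    case True
    have each: "{\<omega> \<in> space M. \<bar>S c j \<omega> - S c m \<omega>\<bar> < l} \<in> sets (F k)" if "j \<in> {m..k}" for j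
    proof -
      have [measurable]: "S c j \<in> borel_measurable (F k)" "S c m \<in> borel_measurable (F k)"
        using S_Fmeas[OF ad] that by auto
      have "{\<omega> \<in> space (F k). \<bar>S c j \<omega> - S c m \<omega>\<bar> < l} \<in> sets (F k)" by measurable
      then show ?thesis by (simp add: space_F)
    qed
    have "Gs k = space (F k) \<inter> (\<Inter>j\<in>{m..k}. {\<omega> \<in> space M. \<bar>S c j \<omega> - S c m \<omega>\<bar> < l})"
      unfolding Gs_def space_F using True by auto
    also have "\<dots> \<in> sets (F k)"
      using True each by (intro sets.Int sets.top sets.finite_INT) auto
    finally show ?thesis .
  qed
  define c' where "c' k \<omega> = (if m \<le> k then indicator (Gs k) \<omega> else 0) *\<^sub>R c k \<omega>" for k \<omega>
  have normc': "norm (c' k \<omega>) \<le> norm (c k \<omega>)" for k \<omega>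
    unfolding c'_def by (auto simp: indicator_def)
  have ad': "adapted c'"
    unfolding adapted_def
  proof (intro allI conjI)
    fix k
    have [measurable]: "c k \<in> borel_measurable (F k)" using adaptedD(1)[OF ad] .
    have [measurable]: "Gs k \<in> sets (F k)" by (rule Gs_sets)
    show cm: "c' k \<in> borel_measurable (F k)" unfolding c'_def[abs_def] by measurable
    have [measurable]: "c' k \<in> borel_measurable M" using measurable_from_subalg[OF subalg cm] .
    show "integrable M (\<lambda>\<omega>. (norm (c' k \<omega>))\<^sup>2)"
    proof (rule Bochner_Integration.integrable_bound[OF adaptedD(2)[OF ad, of k]])
      show "(\<lambda>\<omega>. (norm (c' k \<omega>))\<^sup>2) \<in> borel_measurable M" by measurable
      show "AE \<omega> in M. norm ((norm (c' k \<omega>))\<^sup>2) \<le> norm ((norm (c k \<omega>))\<^sup>2)"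
        using normc' by (auto intro!: power_mono)
    qed
  qed
  have intle: "(\<integral>\<omega>. (norm (c' k \<omega>))\<^sup>2 \<partial>M) \<le> (if m \<le> k then \<integral>\<omega>. (norm (c k \<omega>))\<^sup>2 \<partial>M else 0)" for k
  proof (cases "m \<le> k")
    case True
    show ?thesis using True
      by (simp, intro integral_mono adaptedD(2)[OF ad] adaptedD(2)[OF ad'] power_mono normc') auto
  next
    case False then show ?thesis by (simp add: c'_def)
  qed
  have "(\<Sum>k<n. \<integral>\<omega>. (norm (c' k \<omega>))\<^sup>2 \<partial>M) \<le> (\<Sum>k<n. if m \<le> k then \<integral>\<omega>. (norm (c k \<omega>))\<^sup>2 \<partial>M else 0)"
    by (intro sum_mono intle)
  also have "\<dots> = (\<Sum>k\<in>{k\<in>{..<n}. m \<le> k}. \<integral>\<omega>. (norm (c k \<omega>))\<^sup>2 \<partial>M)"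
    by (subst sum.inter_filter) auto
  also have "{k\<in>{..<n}. m \<le> k} = {m..<n}" by auto
  finally have sumle: "(\<Sum>k<n. \<integral>\<omega>. (norm (c' k \<omega>))\<^sup>2 \<partial>M) \<le> (\<Sum>k\<in>{m..<n}. \<integral>\<omega>. (norm (c k \<omega>))\<^sup>2 \<partial>M)" .
  note sb = sq_bound[OF ad', of n]
  have pw: "l\<^sup>2 * indicator E \<omega> \<le> (S c' n \<omega>)\<^sup>2" for \<omega>
  proof (cases "\<omega> \<in> E")
    case False then show ?thesis by simp
  next
    case True
    then have om: "\<omega> \<in> space M" and ex: "\<exists>j. j \<in> {m..n} \<and> l \<le> \<bar>S c j \<omega> - S c m \<omega>\<bar>"
      unfolding E_def by auto
    define P where "P j \<longleftrightarrow> j \<in> {m..n} \<and> l \<le> \<bar>S c j \<omega> - S c m \<omega>\<bar>" for j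
    define j0 where "j0 = (LEAST j. P j)"
    have Pj0: "P j0" unfolding j0_def using ex P_def by (metis LeastI)
    have j0min: "P j \<Longrightarrow> j0 \<le> j" for j unfolding j0_def by (rule Least_le)
    have j0m: "m < j0" using Pj0 lam unfolding P_def by (cases "j0 = m") auto
    have j0n: "j0 \<le> n" using Pj0 unfolding P_def by auto
    have ceq: "c' k \<omega> \<bullet> w k \<omega> = (if k \<in> {m..<j0} then c k \<omega> \<bullet> w k \<omega> else 0)" if "k < n" for k
    proof (cases "m \<le> k")
      case False then show ?thesis by (simp add: c'_def)
    next
      case mk: True
      show ?thesis
      proof (cases "k < j0")
        case True
        have "\<omega> \<in> Gs k"
          unfolding Gs_def
        proof (intro CollectI conjI ballI om)
          fix j assume "j \<in> {m..k}"
          then have "j < j0" "j \<in> {m..n}" using True j0n by auto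
          then have "\<not> P j" using j0min by fastforce
          then show "\<bar>S c j \<omega> - S c m \<omega>\<bar> < l" using \<open>j \<in> {m..n}\<close> unfolding P_def by auto
        qed
        then show ?thesis using mk True by (simp add: c'_def)
      next
        case False
        have "\<omega> \<notin> Gs k"
        proof
          assume "\<omega> \<in> Gs k"
          then have "\<bar>S c j0 \<omega> - S c m \<omega>\<bar> < l" unfolding Gs_def using False j0m by auto
          then show False using Pj0 unfolding P_def by auto
        qed
        then show ?thesis using mk False by (simp add: c'_def)
      qed
    qed
    have "S c' n \<omega> = (\<Sum>k<n. if k \<in> {m..<j0} then c k \<omega> \<bullet> w k \<omega> else 0)"
      unfolding S_def by (rule sum.cong) (auto simp: ceq)
    also have "\<dots> = (\<Sum>k\<in>{k\<in>{..<n}. k \<in> {m..<j0}}. c k \<omega> \<bullet> w k \<omega>)"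
      by (subst sum.inter_filter) auto
    also have "{k\<in>{..<n}. k \<in> {m..<j0}} = {m..<j0}" using j0n by auto
    also have "(\<Sum>k\<in>{m..<j0}. c k \<omega> \<bullet> w k \<omega>) = S c j0 \<omega> - S c m \<omega>"
      using S_diff[of m j0 c \<omega>] j0m by simp
    finally have "S c' n \<omega> = S c j0 \<omega> - S c m \<omega>" .
    then have "l \<le> \<bar>S c' n \<omega>\<bar>" using Pj0 unfolding P_def by simp
    then have "l\<^sup>2 \<le> \<bar>S c' n \<omega>\<bar>\<^sup>2" using lam by (intro power_mono) auto
    then show ?thesis using True by simp
  qed
  have iE: "integrable M (indicator E :: 'a \<Rightarrow> real)"
    using Esets by (intro integrable_real_indicator) (auto simp: less_top[symmetric])
  have "l\<^sup>2 * measure M E = (\<integral>\<omega>. l\<^sup>2 * indicator E \<omega> \<partial>M)"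
    using Esets by (simp add: integral_indicator)
  also have "\<dots> \<le> (\<integral>\<omega>. (S c' n \<omega>)\<^sup>2 \<partial>M)"
    using iE sb pw by (intro integral_mono) auto
  also have "\<dots> \<le> A * (\<Sum>k<n. \<integral>\<omega>. (norm (c' k \<omega>))\<^sup>2 \<partial>M)" using sb by simp
  also have "\<dots> \<le> A * (\<Sum>k\<in>{m..<n}. \<integral>\<omega>. (norm (c k \<omega>))\<^sup>2 \<partial>M)"
    using sumle A_pos by (intro mult_left_mono) auto
  finally have "l\<^sup>2 * measure M E \<le> A * (\<Sum>k\<in>{m..<n}. \<integral>\<omega>. (norm (c k \<omega>))\<^sup>2 \<partial>M)" .
  then show ?thesis unfolding E_def[symmetric] using lam by (simp add: field_simps)
qed

end


context km begin

lemma mg_conv: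
  assumes ad: "adapted c" and sm: "summable (\<lambda>k. \<integral>\<omega>. (norm (c k \<omega>))\<^sup>2 \<partial>M)"
  shows "AE \<omega> in M. convergent (\<lambda>n. S c n \<omega>)"
proof -
  have Sm[measurable]: "\<And>j. S c j \<in> borel_measurable M" using S_meas[OF ad] .
  define a where "a k = (\<integral>\<omega>. (norm (c k \<omega>))\<^sup>2 \<partial>M)" for k
  have a0: "0 \<le> a k" for k unfolding a_def by simp
  have sa: "summable a" using sm unfolding a_def .
  define T where "T m = (\<Sum>i. a (i + m))" for m
  have T0: "T \<longlonglongrightarrow> 0" unfolding T_def using suminf_exist_split2[OF sa] .
  have tail: "(\<Sum>k\<in>{m..<n}. a k) \<le> T m" for m n
  proof (cases "m \<le> n")
    case True
    have "(\<Sum>k\<in>{m..<n}. a k) = (\<Sum>i\<in>{0..<n-m}. a (i + m))"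
      using sum.shift_bounds_nat_ivl[of a 0 m "n - m"] True by simp
    also have "\<dots> \<le> T m" unfolding T_def
      by (rule sum_le_suminf) (use sa a0 in \<open>auto simp: summable_iff_shift\<close>)
    finally show ?thesis .
  next
    case False
    have "0 \<le> T m" unfolding T_def by (rule suminf_nonneg) (use sa a0 in \<open>auto simp: summable_iff_shift\<close>)
    then show ?thesis using False by simp
  qed
  have good: "AE \<omega> in M. \<exists>m. \<forall>j\<ge>m. \<bar>S c j \<omega> - S c m \<omega>\<bar> < l" if lam: "l > 0" for l
  proof -
    define Ev where "Ev m n = {\<omega>\<in>space M. \<exists>j\<in>{m..n}. l \<le> \<bar>S c j \<omega> - S c m \<omega>\<bar>}" for m n
    have Ev_sets: "Ev m n \<in> sets M" for m n unfolding Ev_def by measurable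
    have Evle: "measure M (Ev m n) \<le> A * T m / l\<^sup>2" for m n
    proof -
      have "measure M (Ev m n) \<le> A * (\<Sum>k\<in>{m..<n}. a k) / l\<^sup>2"
        unfolding Ev_def a_def by (rule maxineq[OF ad lam])
      also have "\<dots> \<le> A * T m / l\<^sup>2"
        using tail[of m n] A_pos lam by (intro divide_right_mono mult_left_mono) auto
      finally show ?thesis .
    qed
    have UNle: "measure M (\<Union>n. Ev m n) \<le> A * T m / l\<^sup>2" for m
    proof -
      have inc: "incseq (Ev m)"
      proof (rule incseq_SucI)
        fix n show "Ev m n \<subseteq> Ev m (Suc n)"
        proof
          fix \<omega> assume "\<omega> \<in> Ev m n"
          then obtain j where "\<omega> \<in> space M" "j \<in> {m..n}" "l \<le> \<bar>S c j \<omega> - S c m \<omega>\<bar>"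
            unfolding Ev_def by blast
          moreover have "j \<in> {m..Suc n}" using \<open>j \<in> {m..n}\<close> by simp
          ultimately show "\<omega> \<in> Ev m (Suc n)" unfolding Ev_def by blast
        qed
      qed
      have "(\<lambda>n. measure M (Ev m n)) \<longlonglongrightarrow> measure M (\<Union>n. Ev m n)"
        using Ev_sets inc by (intro finite_Lim_measure_incseq) auto
      then show ?thesis using Evle by (intro LIMSEQ_le_const2) auto
    qed
    define Bad where "Bad = {\<omega>\<in>space M. \<forall>m. \<exists>j\<ge>m. l \<le> \<bar>S c j \<omega> - S c m \<omega>\<bar>}"
    have Bad_sets: "Bad \<in> sets M" unfolding Bad_def by measurable
    have Bad_sub: "Bad \<subseteq> (\<Union>n. Ev m n)" for m
      unfolding Bad_def Ev_def by auto (metis atLeastAtMost_iff order_refl)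
    have Badle: "measure M Bad \<le> A * T m / l\<^sup>2" for m
    proof -
      have "(\<Union>n. Ev m n) \<in> sets M" by (rule sets.countable_UN) (use Ev_sets in auto)
      from finite_measure_mono[OF Bad_sub this] show ?thesis using UNle[of m] by linarith
    qed
    have "(\<lambda>m. A * T m / l\<^sup>2) \<longlonglongrightarrow> A * 0 / l\<^sup>2"
      by (intro tendsto_intros T0) (use lam in auto)
    then have "measure M Bad \<le> 0" using Badle by (intro LIMSEQ_le_const) auto
    then have "measure M Bad = 0" by (simp add: measure_le_0_iff)
    then have "Bad \<in> null_sets M" using Bad_sets by (simp add: null_sets_def emeasure_eq_measure)
    then have "AE \<omega> in M. \<omega> \<notin> Bad" by (rule AE_not_in)
    then show ?thesis
      by (rule AE_mp) (intro AE_I2 impI, auto simp: Bad_def not_le, meson not_less)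
  qed
  have "AE \<omega> in M. \<forall>r::nat. \<exists>m. \<forall>j\<ge>m. \<bar>S c j \<omega> - S c m \<omega>\<bar> < 1 / Suc r"
    unfolding AE_all_countable by (intro allI good) simp
  then show ?thesis
  proof (rule AE_mp, intro AE_I2 impI)
    fix \<omega> assume H: "\<forall>r::nat. \<exists>m. \<forall>j\<ge>m. \<bar>S c j \<omega> - S c m \<omega>\<bar> < 1 / Suc r"
    have "Cauchy (\<lambda>n. S c n \<omega>)"
      unfolding Cauchy_altdef2
    proof (intro allI impI)
      fix e :: real assume e: "e > 0"
      obtain r :: nat where r: "1 / Suc r < e"
        using e by (metis nat_approx_posE)
      obtain m where "\<forall>j\<ge>m. \<bar>S c j \<omega> - S c m \<omega>\<bar> < 1 / Suc r" using H by blast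
      then show "\<exists>N. \<forall>n\<ge>N. dist (S c n \<omega>) (S c N \<omega>) < e"
        using r by (auto simp: dist_real_def intro!: exI[of _ m])
    qed
    then show "convergent (\<lambda>n. S c n \<omega>)" by (simp add: Cauchy_convergent_iff)
  qed
qed

lemma nn_as_summable:
  fixes q :: "nat \<Rightarrow> 'a \<Rightarrow> real"
  assumes qm: "\<And>k. q k \<in> borel_measurable M" and q0: "\<And>k \<omega>. 0 \<le> q k \<omega>"
    and qi: "\<And>k. integrable M (q k)" and sq: "summable (\<lambda>k. \<integral>\<omega>. q k \<omega> \<partial>M)"
  shows "AE \<omega> in M. summable (\<lambda>k. q k \<omega>)"
proof -
  have "(\<integral>\<^sup>+ \<omega>. (\<Sum>k. ennreal (q k \<omega>)) \<partial>M) = (\<Sum>k. \<integral>\<^sup>+ \<omega>. ennreal (q k \<omega>) \<partial>M)"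
    by (rule nn_integral_suminf) (use qm in auto)
  also have "\<dots> = (\<Sum>k. ennreal (\<integral>\<omega>. q k \<omega> \<partial>M))"
    using qi q0 by (simp add: nn_integral_eq_integral)
  also have "\<dots> \<noteq> \<top>"
    using sq q0 by (intro ennreal_suminf_neq_top) (auto intro: integral_nonneg_AE)
  finally have "AE \<omega> in M. (\<Sum>k. ennreal (q k \<omega>)) \<noteq> \<infinity>"
    by (intro nn_integral_noteq_infinite) (use qm in auto)
  then show ?thesis
    by (rule AE_mp) (intro AE_I2 impI summable_suminf_not_top, use q0 in auto)
qed

end


lemma DL1:
  fixes V d e :: "nat \<Rightarrow> real"
  assumes V0: "\<And>k. 0 \<le> V k" and rec: "\<And>k. V (Suc k) \<le> V k - d k + e k"
    and se: "summable e" and dpos: "\<And>k. k \<ge> K \<Longrightarrow> 0 \<le> d k"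
  shows "convergent V \<and> summable d"
proof -
  define P where "P n = (\<Sum>k<n. e k)" for n
  have Pc: "convergent P" unfolding P_def using se by (simp add: summable_iff_convergent)
  then have "Bseq P" by (rule convergent_imp_Bseq)
  then obtain B where B: "\<And>n. \<bar>P n\<bar> \<le> B" unfolding Bseq_def by (metis real_norm_def less_imp_le)
  define U where "U n = V n - P n" for n
  have Urec: "U (Suc n) \<le> U n - d n" for n
    using rec[of n] unfolding U_def P_def by simp
  have Ulow: "- B \<le> U n" for n using V0[of n] B[of n] unfolding U_def by auto
  have Udec: "U (Suc n) \<le> U n" if "n \<ge> K" for n using Urec[of n] dpos[OF that] by linarith
  have dsum: "(\<Sum>k\<in>{K..<K+n}. d k) \<le> U K - U (K + n)" for n
  proof (induction n)
    case 0 then show ?case by simp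
  next
    case (Suc n)
    have "(\<Sum>k\<in>{K..<K+Suc n}. d k) = (\<Sum>k\<in>{K..<K+n}. d k) + d (K + n)" by simp
    also have "\<dots> \<le> U K - U (K + n) + d (K + n)" using Suc by simp
    also have "\<dots> \<le> U K - U (K + Suc n)" using Urec[of "K + n"] by simp
    finally show ?case .
  qed
  have sd: "summable (\<lambda>k. d (k + K))"
  proof (rule summableI_nonneg_bounded)
    show "0 \<le> d (k + K)" for k using dpos by simp
    show "(\<Sum>k<n. d (k + K)) \<le> U K + B" for n
    proof -
      have "(\<Sum>k<n. d (k + K)) = (\<Sum>k\<in>{K..<K+n}. d k)"
        using sum.shift_bounds_nat_ivl[of d 0 K n] by (simp add: lessThan_atLeast0 add.commute)
      also have "\<dots> \<le> U K - U (K + n)" by (rule dsum)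
      also have "\<dots> \<le> U K + B" using Ulow[of "K + n"] by simp
      finally show ?thesis .
    qed
  qed
  then have "summable d" by (simp add: summable_iff_shift)
  moreover have "convergent U"
  proof -
    have "convergent (\<lambda>n. U (n + K))"
    proof (rule Bseq_monoseq_convergent)
      show "Bseq (\<lambda>n. U (n + K))"
      proof (rule BseqI'[of _ "max B \<bar>U K\<bar>"])
        fix n
        have "U (n + K) \<le> U K"
        proof (induction n)
          case (Suc n) then show ?case using Udec[of "n + K"] by simp
        qed simp
        then show "norm (U (n + K)) \<le> max B \<bar>U K\<bar>" using Ulow[of "n + K"] by auto
      qed
      show "monoseq (\<lambda>n. U (n + K))"
        unfolding monoseq_Suc using Udec by (auto simp: add.commute)
    qed
    then show ?thesis by (simp add: convergent_def LIMSEQ_offset[of U K] ) (metis LIMSEQ_offset)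
  qed
  then have "convergent (\<lambda>n. U n + P n)" using Pc by (rule convergent_add)
  then have "convergent V" unfolding U_def by simp
  ultimately show ?thesis by simp
qed

lemma DL2:
  fixes xs :: "nat \<Rightarrow> 'v::euclidean_space" and H :: "'v \<Rightarrow> 'v"
  assumes Hc: "continuous_on UNIV H"
    and XQ: "Q \<subseteq> {z. H z = z}" and dense: "{z. H z = z} \<subseteq> closure Q" and Qne: "Q \<noteq> {}"
    and conv: "\<And>q. q \<in> Q \<Longrightarrow> convergent (\<lambda>k. norm (xs k - q))"
    and small: "\<And>\<delta> K. \<delta> > 0 \<Longrightarrow> \<exists>k\<ge>K. norm (H (xs k) - xs k) < \<delta>"
  shows "(\<lambda>k. infdist (xs k) {z. H z = z}) \<longlonglongrightarrow> 0"
proof -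
  obtain q0 where q0: "q0 \<in> Q" using Qne by auto
  have "Bseq (\<lambda>k. norm (xs k - q0))" using conv[OF q0] by (rule convergent_imp_Bseq)
  then obtain B where B: "\<And>k. norm (xs k - q0) \<le> B" unfolding Bseq_def by (metis real_norm_def norm_ge_zero abs_of_nonneg less_imp_le)
  have "\<forall>n. \<exists>k\<ge>n. norm (H (xs k) - xs k) < 1 / Suc n" using small by simp
  then obtain f where f: "\<And>n. f n \<ge> n" "\<And>n. norm (H (xs (f n)) - xs (f n)) < 1 / Suc n"
    by metis
  have "bounded (range (\<lambda>n. xs (f n)))"
    unfolding bounded_iff
  proof (intro exI[of _ "B + norm q0"] ballI)
    fix y assume "y \<in> range (\<lambda>n. xs (f n))"
    then obtain n where "y = xs (f n)" by auto
    then show "norm y \<le> B + norm q0" using B[of "f n"] norm_triangle_sub[of y q0] by simp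
  qed
  then obtain p r where r: "strict_mono r" and pr: "((\<lambda>n. xs (f n)) \<circ> r) \<longlonglongrightarrow> p"
    using bounded_imp_convergent_subsequence by blast
  let ?g = "\<lambda>n. f (r n)"
  have g_top: "filterlim ?g sequentially sequentially"
  proof (rule filterlim_at_top_mono[OF filterlim_ident])
    show "\<forall>\<^sub>F n in sequentially. n \<le> f (r n)"
    proof (intro always_eventually allI)
      fix n show "n \<le> f (r n)" using f(1)[of "r n"] seq_suble[OF r, of n] by linarith
    qed
  qed
  have xg: "(\<lambda>n. xs (?g n)) \<longlonglongrightarrow> p" using pr by (simp add: o_def)
  have Tg0: "(\<lambda>n. H (xs (?g n)) - xs (?g n)) \<longlonglongrightarrow> 0"
  proof (rule tendsto_norm_zero_cancel, rule Lim_null_comparison)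
    show "\<forall>\<^sub>F n in sequentially. norm (norm (H (xs (?g n)) - xs (?g n))) \<le> 1 / Suc (r n)"
    proof (intro always_eventually allI)
      fix n show "norm (norm (H (xs (?g n)) - xs (?g n))) \<le> 1 / Suc (r n)"
        using f(2)[of "r n"] by simp
    qed
    show "(\<lambda>n. 1 / real (Suc (r n))) \<longlonglongrightarrow> 0"
      using LIMSEQ_subseq_LIMSEQ[OF LIMSEQ_inverse_real_of_nat r] by (simp add: o_def inverse_eq_divide)
  qed
  have "(\<lambda>n. H (xs (?g n)) - xs (?g n)) \<longlonglongrightarrow> H p - p"
    by (intro tendsto_intros xg continuous_on_tendsto_compose[OF Hc xg]) auto
  then have "H p - p = 0" using Tg0 LIMSEQ_unique by blast
  then have pX: "H p = p" by simp
  have cp: "convergent (\<lambda>k. norm (xs k - p))"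
    unfolding Cauchy_convergent_iff[symmetric] Cauchy_def
  proof (intro allI impI)
    fix e :: real assume e: "e > 0"
    have "p \<in> closure Q" using dense pX by auto
    then obtain q where q: "q \<in> Q" "dist q p < e / 3"
      using e closure_approachable[of p Q] by (metis divide_pos_pos zero_less_numeral)
    have "Cauchy (\<lambda>k. norm (xs k - q))" using conv[OF q(1)] by (simp add: Cauchy_convergent_iff)
    then obtain N where N: "\<And>m n. m \<ge> N \<Longrightarrow> n \<ge> N \<Longrightarrow> dist (norm (xs m - q)) (norm (xs n - q)) < e / 3"
      unfolding Cauchy_def using e by (metis divide_pos_pos zero_less_numeral)
    have cl: "\<bar>norm (xs k - p) - norm (xs k - q)\<bar> \<le> dist q p" for k
    proof -
      have "\<bar>norm (xs k - p) - norm (xs k - q)\<bar> \<le> norm ((xs k - p) - (xs k - q))"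
        by (rule norm_triangle_ineq3)
      then show ?thesis by (simp add: dist_norm)
    qed
    show "\<exists>M. \<forall>m\<ge>M. \<forall>n\<ge>M. dist (norm (xs m - p)) (norm (xs n - p)) < e"
    proof (intro exI[of _ N] allI impI)
      fix m n assume "m \<ge> N" "n \<ge> N"
      then have "dist (norm (xs m - q)) (norm (xs n - q)) < e / 3" by (rule N)
      then show "dist (norm (xs m - p)) (norm (xs n - p)) < e"
        using cl[of m] cl[of n] q(2) unfolding dist_real_def by linarith
    qed
  qed
  then obtain L where L: "(\<lambda>k. norm (xs k - p)) \<longlonglongrightarrow> L" unfolding convergent_def by blast
  have "(\<lambda>n. norm (xs (?g n) - p)) \<longlonglongrightarrow> L"
    using filterlim_compose[OF L g_top] by (simp add: o_def)
  moreover have "(\<lambda>n. norm (xs (?g n) - p)) \<longlonglongrightarrow> 0"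
    using tendsto_norm_zero[OF LIM_zero[OF xg]] .
  ultimately have "L = 0" using LIMSEQ_unique by blast
  with L have L0: "(\<lambda>k. norm (xs k - p)) \<longlonglongrightarrow> 0" by simp
  show ?thesis
  proof (rule Lim_null_comparison[OF _ L0])
    show "\<forall>\<^sub>F k in sequentially. norm (infdist (xs k) {z. H z = z}) \<le> norm (xs k - p)"
      using infdist_le[of p "{z. H z = z}" "xs _"] pX by (auto simp: dist_norm infdist_nonneg)
  qed
qed



lemma norm_add_scale_sq:
  fixes a w :: "'v::real_inner"
  shows "(norm (a + e *\<^sub>R w))\<^sup>2 = (norm a)\<^sup>2 + 2 * e * (a \<bullet> w) + e\<^sup>2 * (norm w)\<^sup>2"
  unfolding power2_norm_eq_inner
  by (simp add: inner_add_left inner_add_right inner_commute power2_eq_square algebra_simps)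

lemma sq_sum_le: "((a::real) + b)\<^sup>2 \<le> 2 * a\<^sup>2 + 2 * b\<^sup>2"
proof -
  have "0 \<le> (a - b)\<^sup>2" by simp
  then show ?thesis by (simp add: power2_eq_square algebra_simps)
qed

context km begin

definition "Tv k \<omega> = H (x k \<omega>) - x k \<omega>"
definition "z xs k \<omega> = x k \<omega> - xs + eps k *\<^sub>R Tv k \<omega>"
definition "V xs k \<omega> = (norm (x k \<omega> - xs))\<^sup>2"

lemma step: "x (Suc k) \<omega> - xs = z xs k \<omega> + eps k *\<^sub>R w k \<omega>"
  unfolding z_def Tv_def x_Suc by (simp add: algebra_simps)

lemma V_Suc: "V xs (Suc k) \<omega> = (norm (z xs k \<omega>))\<^sup>2 + 2 * eps k * (z xs k \<omega> \<bullet> w k \<omega>) + (eps k)\<^sup>2 * (norm (w k \<omega>))\<^sup>2"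
  unfolding V_def step by (rule norm_add_scale_sq)

lemma fixed_key:
  assumes fx: "H xs = xs"
  shows "2 * ((x k \<omega> - xs) \<bullet> Tv k \<omega>) + (norm (Tv k \<omega>))\<^sup>2 \<le> 0"
proof -
  let ?a = "x k \<omega> - xs"
  have "norm (?a + Tv k \<omega>) \<le> norm ?a"
    using nonexp[of "x k \<omega>" xs] fx unfolding Tv_def by (simp add: algebra_simps)
  then have "(norm (?a + Tv k \<omega>))\<^sup>2 \<le> (norm ?a)\<^sup>2" by (intro power_mono) auto
  moreover have "(norm (?a + Tv k \<omega>))\<^sup>2 = (norm ?a)\<^sup>2 + 2 * (?a \<bullet> Tv k \<omega>) + (norm (Tv k \<omega>))\<^sup>2"
    using norm_add_scale_sq[of ?a 1 "Tv k \<omega>"] by simp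
  ultimately show ?thesis by linarith
qed

lemma z_le:
  assumes fx: "H xs = xs"
  shows "(norm (z xs k \<omega>))\<^sup>2 \<le> V xs k \<omega> - eps k * (1 - eps k) * (norm (Tv k \<omega>))\<^sup>2"
proof -
  let ?a = "x k \<omega> - xs" and ?e = "eps k" and ?T = "Tv k \<omega>"
  have "(norm (z xs k \<omega>))\<^sup>2 = (norm ?a)\<^sup>2 + 2 * ?e * (?a \<bullet> ?T) + ?e\<^sup>2 * (norm ?T)\<^sup>2"
    unfolding z_def by (rule norm_add_scale_sq)
  also have "\<dots> = (norm ?a)\<^sup>2 + ?e * (2 * (?a \<bullet> ?T) + (norm ?T)\<^sup>2) - ?e * (1 - ?e) * (norm ?T)\<^sup>2"
    by (simp add: power2_eq_square algebra_simps)
  also have "\<dots> \<le> (norm ?a)\<^sup>2 + ?e * 0 - ?e * (1 - ?e) * (norm ?T)\<^sup>2"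
    using fixed_key[OF fx, of k \<omega>] eps_pos[of k] by (intro diff_right_mono add_left_mono mult_left_mono) auto
  finally show ?thesis unfolding V_def by simp
qed

lemma z_norm:
  assumes fx: "H xs = xs"
  shows "norm (z xs k \<omega>) \<le> (\<bar>1 - eps k\<bar> + eps k) * norm (x k \<omega> - xs)"
proof -
  have e: "z xs k \<omega> = (1 - eps k) *\<^sub>R (x k \<omega> - xs) + eps k *\<^sub>R (H (x k \<omega>) - xs)"
    unfolding z_def Tv_def by (simp add: algebra_simps)
  have hb: "norm (H (x k \<omega>) - xs) \<le> norm (x k \<omega> - xs)" using nonexp[of "x k \<omega>" xs] fx by simp
  have "norm (z xs k \<omega>) \<le> \<bar>1 - eps k\<bar> * norm (x k \<omega> - xs) + eps k * norm (H (x k \<omega>) - xs)"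
    unfolding e using norm_triangle_ineq[of "(1 - eps k) *\<^sub>R (x k \<omega> - xs)" "eps k *\<^sub>R (H (x k \<omega>) - xs)"]
      eps_pos[of k] by simp
  also have "\<dots> \<le> \<bar>1 - eps k\<bar> * norm (x k \<omega> - xs) + eps k * norm (x k \<omega> - xs)"
    using hb eps_pos[of k] by (intro add_left_mono mult_left_mono) auto
  finally show ?thesis by (simp add: algebra_simps)
qed

lemma T_norm:
  assumes fx: "H xs = xs"
  shows "norm (Tv k \<omega>) \<le> 2 * norm (x k \<omega> - xs)"
proof -
  have "Tv k \<omega> = (H (x k \<omega>) - xs) - (x k \<omega> - xs)" unfolding Tv_def by simp
  then have "norm (Tv k \<omega>) \<le> norm (H (x k \<omega>) - xs) + norm (x k \<omega> - xs)"
    by (metis norm_triangle_ineq4)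
  also have "\<dots> \<le> 2 * norm (x k \<omega> - xs)" using nonexp[of "x k \<omega>" xs] fx by simp
  finally show ?thesis .
qed

lemma z_F[measurable]: "z xs k \<in> borel_measurable (F k)"
proof -
  have [measurable]: "x k \<in> borel_measurable (F k)" by (rule x_F) simp
  show ?thesis unfolding z_def[abs_def] Tv_def[abs_def] by measurable
qed

lemma z_M[measurable]: "z xs k \<in> borel_measurable M"
  using measurable_from_subalg[OF subalg z_F] .

lemma Tv_M[measurable]: "Tv k \<in> borel_measurable M"
  unfolding Tv_def[abs_def] by measurable

lemma V_M[measurable]: "V xs k \<in> borel_measurable M"
  unfolding V_def[abs_def] by measurable

lemma V_int:
  assumes fx: "H xs = xs"
  shows "integrable M (V xs k)"
proof (induction k)
  case 0 then show ?case by (simp add: V_def x_0)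
next
  case (Suc k)
  define C where "C = \<bar>1 - eps k\<bar> + eps k"
  have bnd: "V xs (Suc k) \<omega> \<le> 2 * C\<^sup>2 * V xs k \<omega> + 2 * (eps k)\<^sup>2 * (norm (w k \<omega>))\<^sup>2" for \<omega>
  proof -
    have "norm (x (Suc k) \<omega> - xs) \<le> norm (z xs k \<omega>) + eps k * norm (w k \<omega>)"
      unfolding step using norm_triangle_ineq[of "z xs k \<omega>" "eps k *\<^sub>R w k \<omega>"] eps_pos[of k] by simp
    then have "V xs (Suc k) \<omega> \<le> (norm (z xs k \<omega>) + eps k * norm (w k \<omega>))\<^sup>2"
      unfolding V_def by (intro power_mono) auto
    also have "\<dots> \<le> 2 * (norm (z xs k \<omega>))\<^sup>2 + 2 * (eps k * norm (w k \<omega>))\<^sup>2" by (rule sq_sum_le)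
    also have "(norm (z xs k \<omega>))\<^sup>2 \<le> (C * norm (x k \<omega> - xs))\<^sup>2"
      using z_norm[OF fx, of k \<omega>] unfolding C_def by (intro power_mono) auto
    finally show ?thesis unfolding V_def by (simp add: power_mult_distrib)
  qed
  have i: "integrable M (\<lambda>\<omega>. 2 * C\<^sup>2 * V xs k \<omega> + 2 * (eps k)\<^sup>2 * (norm (w k \<omega>))\<^sup>2)"
    using Suc w_sq_int[of k] by auto
  show ?case
    by (rule Bochner_Integration.integrable_bound[OF i]) (use bnd in \<open>auto simp: V_def\<close>)
qed

lemma V_nonneg: "0 \<le> V xs k \<omega>" unfolding V_def by simp

lemma z_sq_int:
  assumes fx: "H xs = xs"
  shows "integrable M (\<lambda>\<omega>. (norm (z xs k \<omega>))\<^sup>2)"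
proof -
  define C where "C = \<bar>1 - eps k\<bar> + eps k"
  have "(norm (z xs k \<omega>))\<^sup>2 \<le> C\<^sup>2 * V xs k \<omega>" for \<omega>
  proof -
    have "(norm (z xs k \<omega>))\<^sup>2 \<le> (C * norm (x k \<omega> - xs))\<^sup>2"
      using z_norm[OF fx, of k \<omega>] unfolding C_def by (intro power_mono) auto
    then show ?thesis unfolding V_def by (simp add: power_mult_distrib)
  qed
  then show ?thesis
    by (intro Bochner_Integration.integrable_bound[OF integrable_mult_right[OF V_int[OF fx], of "C\<^sup>2" k]])
       (auto simp: V_def)
qed

lemma T_sq_int:
  assumes fx: "H xs = xs"
  shows "integrable M (\<lambda>\<omega>. (norm (Tv k \<omega>))\<^sup>2)"
proof -
  have "(norm (Tv k \<omega>))\<^sup>2 \<le> 4 * V xs k \<omega>" for \<omega>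
  proof -
    have "(norm (Tv k \<omega>))\<^sup>2 \<le> (2 * norm (x k \<omega> - xs))\<^sup>2"
      using T_norm[OF fx, of k \<omega>] by (intro power_mono) auto
    then show ?thesis unfolding V_def by (simp add: power_mult_distrib)
  qed
  then show ?thesis
    by (intro Bochner_Integration.integrable_bound[OF integrable_mult_right[OF V_int[OF fx], of 4 k]])
       (auto simp: V_def)
qed

lemma zw_int:
  assumes fx: "H xs = xs"
  shows "integrable M (\<lambda>\<omega>. z xs k \<omega> \<bullet> w k \<omega>)" "(\<integral>\<omega>. z xs k \<omega> \<bullet> w k \<omega> \<partial>M) = 0"
proof -
  have "integrable M (\<lambda>\<omega>. norm (z xs k \<omega>))"
  proof (rule Bochner_Integration.integrable_bound[OF Bochner_Integration.integrable_add[OF integrable_const z_sq_int[OF fx]]])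
    show "(\<lambda>\<omega>. norm (z xs k \<omega>)) \<in> borel_measurable M" by measurable
    show "AE \<omega> in M. norm (norm (z xs k \<omega>)) \<le> norm (1 + (norm (z xs k \<omega>))\<^sup>2)"
      using le_one_plus_sq by (auto intro!: AE_I2 simp: abs_of_nonneg add_nonneg_nonneg)
  qed
  from orth[OF z_F this] show "integrable M (\<lambda>\<omega>. z xs k \<omega> \<bullet> w k \<omega>)" "(\<integral>\<omega>. z xs k \<omega> \<bullet> w k \<omega> \<partial>M) = 0" by auto
qed

lemma ER:
  assumes fx: "H xs = xs"
  shows "(\<integral>\<omega>. V xs (Suc k) \<omega> \<partial>M) \<le> (\<integral>\<omega>. (norm (z xs k \<omega>))\<^sup>2 \<partial>M) + (eps k)\<^sup>2 * A"
    and "(\<integral>\<omega>. (norm (z xs k \<omega>))\<^sup>2 \<partial>M) \<le> (\<integral>\<omega>. V xs k \<omega> \<partial>M) - eps k * (1 - eps k) * (\<integral>\<omega>. (norm (Tv k \<omega>))\<^sup>2 \<partial>M)"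
proof -
  note zi = z_sq_int[OF fx, of k] and zw = zw_int[OF fx, of k] and wi = w_sq_int[of k]
  have "(\<integral>\<omega>. V xs (Suc k) \<omega> \<partial>M) = (\<integral>\<omega>. (norm (z xs k \<omega>))\<^sup>2 + 2 * eps k * (z xs k \<omega> \<bullet> w k \<omega>) + (eps k)\<^sup>2 * (norm (w k \<omega>))\<^sup>2 \<partial>M)"
    unfolding V_Suc ..
  also have "\<dots> = (\<integral>\<omega>. (norm (z xs k \<omega>))\<^sup>2 \<partial>M) + 2 * eps k * (\<integral>\<omega>. z xs k \<omega> \<bullet> w k \<omega> \<partial>M) + (eps k)\<^sup>2 * (\<integral>\<omega>. (norm (w k \<omega>))\<^sup>2 \<partial>M)"
    using zi zw(1) wi by simp
  also have "\<dots> \<le> (\<integral>\<omega>. (norm (z xs k \<omega>))\<^sup>2 \<partial>M) + (eps k)\<^sup>2 * A"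
    using zw(2) w_sq_exp[of k] by (simp add: mult_left_mono)
  finally show "(\<integral>\<omega>. V xs (Suc k) \<omega> \<partial>M) \<le> (\<integral>\<omega>. (norm (z xs k \<omega>))\<^sup>2 \<partial>M) + (eps k)\<^sup>2 * A" .
  have "(\<integral>\<omega>. (norm (z xs k \<omega>))\<^sup>2 \<partial>M) \<le> (\<integral>\<omega>. V xs k \<omega> - eps k * (1 - eps k) * (norm (Tv k \<omega>))\<^sup>2 \<partial>M)"
    using zi V_int[OF fx, of k] T_sq_int[OF fx, of k] z_le[OF fx] by (intro integral_mono) auto
  also have "\<dots> = (\<integral>\<omega>. V xs k \<omega> \<partial>M) - eps k * (1 - eps k) * (\<integral>\<omega>. (norm (Tv k \<omega>))\<^sup>2 \<partial>M)"
    using V_int[OF fx, of k] T_sq_int[OF fx, of k] by simp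
  finally show "(\<integral>\<omega>. (norm (z xs k \<omega>))\<^sup>2 \<partial>M) \<le> (\<integral>\<omega>. V xs k \<omega> \<partial>M) - eps k * (1 - eps k) * (\<integral>\<omega>. (norm (Tv k \<omega>))\<^sup>2 \<partial>M)" .
qed

end



lemma h_low: "ln (real n + 1) \<le> (\<Sum>i<n. 1 / (real i + 1))"
proof (induction n)
  case 0 then show ?case by simp
next
  case (Suc n)
  have e: "1 + 1 / (real n + 1) = (real n + 2) / (real n + 1)" by (simp add: field_simps)
  have "ln (real n + 2) - ln (real n + 1) = ln (1 + 1 / (real n + 1))"
    unfolding e by (subst ln_div) auto
  also have "\<dots> \<le> 1 / (real n + 1)" by (rule ln_add_one_self_le_self) simp
  finally show ?case using Suc by (simp add: add.commute)
qed

lemma h_up: "n \<ge> 1 \<Longrightarrow> (\<Sum>i<n. 1 / (real i + 1)) \<le> 1 + ln (real n)"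
proof (induction n rule: dec_induct)
  case base then show ?case by simp
next
  case (step n)
  have n0: "real n > 0" using step.hyps by simp
  have "ln (real n / (real n + 1)) \<le> real n / (real n + 1) - 1"
    by (rule ln_le_minus_one) (use n0 in simp)
  also have "\<dots> = - (1 / (real n + 1))" by (simp add: field_simps)
  finally have "1 / (real n + 1) \<le> ln (real n + 1) - ln (real n)"
    using n0 by (simp add: ln_div)
  then show ?case using step.IH by (simp add: add.commute)
qed

lemma sq_aux: "(t::real) \<ge> 0 \<Longrightarrow> 1 / (t + 1)\<^sup>2 \<le> 2 / (t + 1) - 2 / (t + 2)"
proof -
  assume t: "t \<ge> 0"
  have e: "2 / (t + 1) - 2 / (t + 2) = 2 / ((t + 1) * (t + 2))" using t by (simp add: field_simps)
  have e2: "1 / (t + 1)\<^sup>2 = 2 / (2 * (t + 1)\<^sup>2)" by simp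
  have "(t + 1) * (t + 2) \<le> 2 * (t + 1)\<^sup>2"
  proof -
    have "0 \<le> t * t" using t by simp
    then show ?thesis using t by (simp add: power2_eq_square algebra_simps)
  qed
  then have "2 / (2 * (t + 1)\<^sup>2) \<le> 2 / ((t + 1) * (t + 2))"
    using t by (intro divide_left_mono) auto
  then show ?thesis unfolding e e2 .
qed

lemma sq_up: "(\<Sum>i<n. 1 / (real i + 1)\<^sup>2) \<le> 2 - 2 / (real n + 1)"
proof (induction n)
  case 0 then show ?case by simp
next
  case (Suc n)
  have "1 / (real n + 1)\<^sup>2 \<le> 2 / (real n + 1) - 2 / (real n + 2)"
    by (rule sq_aux) simp
  then show ?case using Suc by (simp add: add.commute)
qed

lemma s_low: "2 * (sqrt (real n + 1) - 1) \<le> (\<Sum>i<n. 1 / sqrt (real i + 1))"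
proof (induction n)
  case 0 then show ?case by simp
next
  case (Suc n)
  define a where "a = sqrt (real n + 1)"
  define b where "b = sqrt (real n + 2)"
  have a0: "a > 0" unfolding a_def by simp
  have ab: "b\<^sup>2 = a\<^sup>2 + 1" unfolding a_def b_def by simp
  have "2 * a * (b - a) \<le> 1"
  proof -
    have "0 \<le> (b - a)\<^sup>2" by simp
    then show ?thesis using ab by (simp add: power2_eq_square algebra_simps)
  qed
  then have "2 * (b - a) \<le> 1 / a" using a0 by (simp add: field_simps)
  then have "2 * (sqrt (real n + 2) - 1) \<le> 2 * (sqrt (real n + 1) - 1) + 1 / sqrt (real n + 1)"
    unfolding a_def b_def by simp
  then show ?case using Suc by (simp add: add.commute)
qed

lemma key_c:
  assumes k: "k \<ge> (1::nat)"
  shows "(\<Sum>i<Suc k. 1 / (real i + 1)) * (sqrt (real k + 1) - 1) \<le> (1 + ln (real k)) * (sqrt (real k + 2) - 1)"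
proof -
  define a where "a = sqrt (real k + 1)"
  define b where "b = sqrt (real k + 2)"
  define L where "L = 1 + ln (real k)"
  have a1: "a > 1" unfolding a_def using k by simp
  have ab: "b\<^sup>2 = a\<^sup>2 + 1" unfolding a_def b_def by simp
  have b0: "b > 0" unfolding b_def by simp
  have ba: "b > a" unfolding a_def b_def by simp
  have bA: "b \<le> a + 1"
  proof -
    have "b\<^sup>2 \<le> (a + 1)\<^sup>2" using ab a1 by (simp add: power2_eq_square algebra_simps)
    then show ?thesis by (rule power2_le_imp_le) (use a1 in simp)
  qed
  have L1: "L \<ge> 1" unfolding L_def using k by simp
  have core: "(a - 1) * (a + b) \<le> L * a\<^sup>2"
  proof (cases "k \<ge> 3")
    case True
    have "ln 3 \<le> ln (real k)" using True by simp
    then have "L \<ge> 2" using ln3_gt_1 unfolding L_def by linarith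
    moreover have "(a - 1) * (a + b) \<le> 2 * a\<^sup>2"
    proof -
      have "a * b \<le> a * (a + 1)" using bA a1 by (intro mult_left_mono) auto
      then show ?thesis using a1 b0 by (simp add: power2_eq_square algebra_simps)
    qed
    moreover have "2 * a\<^sup>2 \<le> L * a\<^sup>2" using \<open>L \<ge> 2\<close> by (intro mult_right_mono) auto
    ultimately show ?thesis by linarith
  next
    case False
    then have "real k + 2 \<le> 4" by simp
    then have b2: "b \<le> 2" unfolding b_def using real_sqrt_le_mono[of "real k + 2" 4] by simp
    have a2: "a \<le> 2" using ba b2 by simp
    have "(a - 1) * (b - 1) \<le> 1 * 1" using a1 a2 b2 ba by (intro mult_mono) auto
    then have "(a - 1) * (a + b) \<le> a\<^sup>2" by (simp add: power2_eq_square algebra_simps)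
    also have "\<dots> \<le> L * a\<^sup>2" using mult_right_mono[OF L1, of "a\<^sup>2"] by simp
    finally show ?thesis .
  qed
  have bma: "b - a = 1 / (a + b)"
    using ab a1 b0 by (simp add: field_simps power2_eq_square)
  have t: "(a - 1) / a\<^sup>2 \<le> L * (b - a)"
    unfolding bma using core a1 b0 by (simp add: field_simps)
  have h: "(\<Sum>i<Suc k. 1 / (real i + 1)) \<le> L + 1 / a\<^sup>2"
    using h_up[OF k] unfolding L_def a_def by (simp add: add.commute)
  have "(\<Sum>i<Suc k. 1 / (real i + 1)) * (a - 1) \<le> (L + 1 / a\<^sup>2) * (a - 1)"
    using h a1 by (intro mult_right_mono) auto
  also have "\<dots> = L * (a - 1) + (a - 1) / a\<^sup>2" by (simp add: algebra_simps)
  also have "\<dots> \<le> L * (a - 1) + L * (b - a)" using t by simp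
  also have "\<dots> = L * (b - 1)" by (simp add: algebra_simps)
  finally show ?thesis unfolding a_def b_def L_def .
qed


context km begin

lemma cum:
  assumes fx: "H xs = xs"
  shows "(\<integral>\<omega>. V xs n \<omega> \<partial>M) + (\<Sum>i<n. eps i * (1 - eps i) * (\<integral>\<omega>. (norm (Tv i \<omega>))\<^sup>2 \<partial>M))
         \<le> (norm (x0 - xs))\<^sup>2 + A * (\<Sum>i<n. (eps i)\<^sup>2)"
proof (induction n)
  case 0 then show ?case by (simp add: V_def x_0 prob_space)
next
  case (Suc n)
  note e = ER[OF fx, of n]
  show ?case using Suc e by (simp add: algebra_simps)
qed

lemma GEN:
  assumes fx: "H xs = xs" and e1: "e < 1" and ek: "\<And>i. i \<le> k \<Longrightarrow> eps i \<le> e"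
  shows "Min ((\<lambda>i. \<integral>\<omega>. (norm (H (x i \<omega>) - x i \<omega>))\<^sup>2 \<partial>M) ` {0..k}) * ((1 - e) * (\<Sum>i<Suc k. eps i))
         \<le> (norm (x0 - xs))\<^sup>2 + A * (\<Sum>i<Suc k. (eps i)\<^sup>2)"
proof -
  define E where "E i = (\<integral>\<omega>. (norm (Tv i \<omega>))\<^sup>2 \<partial>M)" for i
  have Eeq: "(\<lambda>i. \<integral>\<omega>. (norm (H (x i \<omega>) - x i \<omega>))\<^sup>2 \<partial>M) = E" unfolding E_def Tv_def by simp
  define R where "R = Min (E ` {0..k})"
  have RE: "R \<le> E i" if "i \<le> k" for i unfolding R_def using that by (intro Min_le) auto
  have E0: "0 \<le> E i" for i unfolding E_def by simp
  have R0: "0 \<le> R" unfolding R_def using E0 by (subst Min_ge_iff) auto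
  have "R * ((1 - e) * (\<Sum>i<Suc k. eps i)) = (\<Sum>i<Suc k. R * (1 - e) * eps i)"
    by (simp add: sum_distrib_left algebra_simps)
  also have "\<dots> \<le> (\<Sum>i<Suc k. eps i * (1 - eps i) * E i)"
  proof (rule sum_mono)
    fix i assume "i \<in> {..<Suc k}"
    then have ik: "i \<le> k" by simp
    have "R * (1 - e) \<le> E i * (1 - eps i)"
      using RE[OF ik] ek[OF ik] e1 R0 by (intro mult_mono) auto
    then show "R * (1 - e) * eps i \<le> eps i * (1 - eps i) * E i"
      using eps_pos[of i] mult_right_mono[of "R * (1 - e)" "E i * (1 - eps i)" "eps i"] by (simp add: algebra_simps)
  qed
  also have "\<dots> \<le> (\<integral>\<omega>. V xs (Suc k) \<omega> \<partial>M) + (\<Sum>i<Suc k. eps i * (1 - eps i) * E i)"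
    using V_nonneg by (simp add: integral_nonneg_AE)
  also have "\<dots> \<le> (norm (x0 - xs))\<^sup>2 + A * (\<Sum>i<Suc k. (eps i)\<^sup>2)"
    using cum[OF fx, of "Suc k"] unfolding E_def .
  finally show ?thesis unfolding Eeq R_def .
qed

abbreviation "Rk k \<equiv> Min ((\<lambda>i. \<integral>\<omega>. (norm (H (x i \<omega>) - x i \<omega>))\<^sup>2 \<partial>M) ` {0..k})"

lemma Rk_nonneg: "0 \<le> Rk k"
  by (subst Min_ge_iff) auto

lemma part_b:
  assumes fx: "H xs = xs" and e: "0 < e" "e < 1" and ee: "\<And>k. eps k = e"
  shows "Rk k \<le> (norm (x0 - xs))\<^sup>2 / ((real k + 1) * (1 - e) * e) + A * e / (1 - e)"
proof -
  have g: "Rk k * ((1 - e) * ((real k + 1) * e)) \<le> (norm (x0 - xs))\<^sup>2 + A * ((real k + 1) * e\<^sup>2)"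
    using GEN[OF fx e(2), of k] by (simp add: ee add.commute)
  have pos: "0 < (real k + 1) * (1 - e) * e" using e by simp
  have "Rk k \<le> ((norm (x0 - xs))\<^sup>2 + A * ((real k + 1) * e\<^sup>2)) / ((real k + 1) * (1 - e) * e)"
    using g pos by (simp add: pos_le_divide_eq algebra_simps)
  also have "\<dots> = (norm (x0 - xs))\<^sup>2 / ((real k + 1) * (1 - e) * e) + A * e / (1 - e)"
  proof -
    have ne: "(real k + 1) * (1 - e) * e \<noteq> 0" using e by simp
    have "A * ((real k + 1) * e\<^sup>2) = A * e / (1 - e) * ((real k + 1) * (1 - e) * e)"
      using e by (simp add: field_simps power2_eq_square)
    then have "A * ((real k + 1) * e\<^sup>2) / ((real k + 1) * (1 - e) * e) = A * e / (1 - e)"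
      using ne by (simp add: nonzero_divide_eq_eq)
    then show ?thesis by (simp add: add_divide_distrib)
  qed
  finally show ?thesis .
qed

lemma part_c:
  assumes fx: "H xs = xs" and e: "0 < e" "e < 1" and ee: "\<And>k. eps k = e / sqrt (real k + 1)"
    and k: "k \<ge> 1"
  shows "Rk k \<le> ((norm (x0 - xs))\<^sup>2 + A * e\<^sup>2 * (1 + ln (real k))) / (2 * (1 - e) * e * (sqrt (real k + 1) - 1))"
proof -
  define N where "N = (norm (x0 - xs))\<^sup>2"
  define s1 where "s1 = (\<Sum>i<Suc k. 1 / sqrt (real i + 1))"
  define h where "h = (\<Sum>i<Suc k. 1 / (real i + 1))"
  define L where "L = 1 + ln (real k)"
  define s where "s = 2 * (sqrt (real k + 1) - 1)"
  define s' where "s' = 2 * (sqrt (real k + 2) - 1)"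
  define Q where "Q = Rk k * (1 - e) * e"
  have N0: "0 \<le> N" unfolding N_def by simp
  have Q0: "0 \<le> Q" unfolding Q_def using Rk_nonneg e by simp
  have ek: "eps i \<le> e" for i
  proof -
    have "1 \<le> sqrt (real i + 1)" by simp
    then have "e / sqrt (real i + 1) \<le> e / 1" using e by (intro divide_left_mono) auto
    then show ?thesis by (simp add: ee)
  qed
  have se: "(\<Sum>i<Suc k. eps i) = e * s1" unfolding s1_def ee by (simp only: sum_distrib_left) simp
  have sq: "(\<Sum>i<Suc k. (eps i)\<^sup>2) = e\<^sup>2 * h"
    unfolding h_def ee power_divide by (simp only: sum_distrib_left) simp
  have g: "Q * s1 \<le> N + A * (e\<^sup>2 * h)"
    using GEN[OF fx e(2) ek, of k] unfolding se sq Q_def N_def by (simp add: algebra_simps)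
  have spos: "0 < s" unfolding s_def using k by simp
  have ss': "s \<le> s'" unfolding s_def s'_def by simp
  have s's1: "s' \<le> s1" unfolding s'_def s1_def using s_low[of "Suc k"] by (simp add: add.commute)
  have h0: "0 \<le> h" unfolding h_def by (intro sum_nonneg) auto
  have hL: "h * s \<le> L * s'"
    using key_c[OF k] unfolding h_def L_def s_def s'_def by (simp add: algebra_simps)
  have s1pos: "0 < s1" using spos ss' s's1 by linarith
  have s'pos: "0 < s'" using spos ss' by linarith
  have "Q * s = Q * s1 * (s / s1)" using s1pos by simp
  also have "\<dots> \<le> (N + A * (e\<^sup>2 * h)) * (s / s1)"
    using g spos s1pos by (intro mult_right_mono) auto
  also have "\<dots> = N * (s / s1) + A * e\<^sup>2 * (h * s / s1)" by (simp add: algebra_simps)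
  also have "\<dots> \<le> N * 1 + A * e\<^sup>2 * (h * s / s')"
  proof (intro add_mono mult_left_mono)
    show "s / s1 \<le> 1" using ss' s's1 s1pos by simp
    show "h * s / s1 \<le> h * s / s'" using h0 spos s'pos s's1 by (intro divide_left_mono) auto
  qed (use N0 A_pos in auto)
  also have "\<dots> \<le> N + A * e\<^sup>2 * L"
  proof -
    have hsL: "h * s / s' \<le> L" using hL s'pos by (simp add: pos_divide_le_eq)
    have "A * e\<^sup>2 * (h * s / s') \<le> A * e\<^sup>2 * L" by (rule mult_left_mono[OF hsL]) (use A_pos in simp)
    then show ?thesis by simp
  qed
  finally have Qs: "Q * s \<le> N + A * e\<^sup>2 * L" .
  have "Rk k * (2 * (1 - e) * e * (sqrt (real k + 1) - 1)) = Q * s"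
    unfolding Q_def s_def by (simp add: algebra_simps)
  then have "Rk k * (2 * (1 - e) * e * (sqrt (real k + 1) - 1)) \<le> N + A * e\<^sup>2 * L" using Qs by simp
  moreover have "0 < 2 * (1 - e) * e * (sqrt (real k + 1) - 1)" using e k by simp
  ultimately show ?thesis unfolding N_def L_def by (simp add: pos_le_divide_eq)
qed

lemma part_d:
  assumes fx: "H xs = xs" and e: "0 < e" "e < 1" and ee: "\<And>k. eps k = e / (real k + 1)"
    and k: "k \<ge> 1"
  shows "Rk k \<le> ((norm (x0 - xs))\<^sup>2 + 2 * A * e\<^sup>2) / ((1 - e) * e) * (1 / ln (real k + 1))"
proof -
  define N where "N = (norm (x0 - xs))\<^sup>2"
  define h where "h = (\<Sum>i<Suc k. 1 / (real i + 1))"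
  define Q where "Q = Rk k * (1 - e) * e"
  have Q0: "0 \<le> Q" unfolding Q_def using Rk_nonneg e by simp
  have ek: "eps i \<le> e" for i
  proof -
    have "e / (real i + 1) \<le> e / 1" using e by (intro divide_left_mono) auto
    then show ?thesis by (simp add: ee)
  qed
  have se: "(\<Sum>i<Suc k. eps i) = e * h" unfolding h_def ee by (simp only: sum_distrib_left) simp
  have sq: "(\<Sum>i<Suc k. (eps i)\<^sup>2) = e\<^sup>2 * (\<Sum>i<Suc k. 1 / (real i + 1)\<^sup>2)"
    unfolding ee power_divide by (simp only: sum_distrib_left) simp
  have sq2: "(\<Sum>i<Suc k. 1 / (real i + 1)\<^sup>2) \<le> 2"
    using sq_up[of "Suc k"] by (smt (verit) divide_nonneg_nonneg of_nat_0_le_iff)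
  have g: "Q * h \<le> N + A * (e\<^sup>2 * (\<Sum>i<Suc k. 1 / (real i + 1)\<^sup>2))"
    using GEN[OF fx e(2) ek, of k] unfolding se sq Q_def N_def by (simp add: algebra_simps)
  also have "\<dots> \<le> N + 2 * A * e\<^sup>2"
  proof -
    have a: "e\<^sup>2 * (\<Sum>i<Suc k. 1 / (real i + 1)\<^sup>2) \<le> e\<^sup>2 * 2" using sq2 by (intro mult_left_mono) auto
    have "A * (e\<^sup>2 * (\<Sum>i<Suc k. 1 / (real i + 1)\<^sup>2)) \<le> A * (e\<^sup>2 * 2)"
      using mult_left_mono[OF a, of A] A_pos by linarith
    moreover have "A * (e\<^sup>2 * 2) = 2 * A * e\<^sup>2" by simp
    ultimately show ?thesis by linarith
  qed
  finally have g2: "Q * h \<le> N + 2 * A * e\<^sup>2" .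
  have lpos: "0 < ln (real k + 1)" using k by simp
  have lh: "ln (real k + 1) \<le> h"
  proof -
    have "ln (real k + 1) \<le> ln (real (Suc k) + 1)" by simp
    also have "\<dots> \<le> h" unfolding h_def by (rule h_low)
    finally show ?thesis .
  qed
  have "Q * ln (real k + 1) \<le> Q * h" using Q0 lh by (intro mult_left_mono)
  with g2 have "Q * ln (real k + 1) \<le> N + 2 * A * e\<^sup>2" by linarith
  then have "Rk k * ((1 - e) * e * ln (real k + 1)) \<le> N + 2 * A * e\<^sup>2" unfolding Q_def by (simp add: algebra_simps)
  moreover have "0 < (1 - e) * e * ln (real k + 1)" using e lpos by simp
  ultimately have "Rk k \<le> (N + 2 * A * e\<^sup>2) / ((1 - e) * e * ln (real k + 1))"
    by (simp add: pos_le_divide_eq)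
  then show ?thesis unfolding N_def by simp
qed

end


lemma div_not_summable:
  fixes a :: "nat \<Rightarrow> real"
  assumes div: "filterlim (\<lambda>n. \<Sum>k<n. a k) at_top sequentially" and a0: "\<And>k. 0 \<le> a k"
  shows "\<not> summable a"
proof
  assume sa: "summable a"
  have "eventually (\<lambda>n. suminf a + 1 \<le> (\<Sum>k<n. a k)) sequentially"
    using div by (simp add: filterlim_at_top)
  then obtain n where "suminf a + 1 \<le> (\<Sum>k<n. a k)" by (auto simp: eventually_sequentially)
  moreover have "(\<Sum>k<n. a k) \<le> suminf a" using sa a0 by (intro sum_le_suminf) auto
  ultimately show False by linarith
qed

context km begin

lemma eps_small:
  assumes sq: "summable (\<lambda>k. (eps k)\<^sup>2)"
  obtains K where "\<And>k. k \<ge> K \<Longrightarrow> eps k \<le> 1 / 2"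
proof -
  have "(\<lambda>k. (eps k)\<^sup>2) \<longlonglongrightarrow> 0" using summable_LIMSEQ_zero[OF sq] .
  then have "eventually (\<lambda>k. (eps k)\<^sup>2 < 1 / 4) sequentially"
    by (rule order_tendstoD) simp
  then obtain K where K: "\<And>k. k \<ge> K \<Longrightarrow> (eps k)\<^sup>2 < 1 / 4" by (auto simp: eventually_sequentially)
  have "eps k \<le> 1 / 2" if "k \<ge> K" for k
  proof (rule ccontr)
    assume "\<not> eps k \<le> 1 / 2"
    then have "(1 / 2) ^ 2 \<le> (eps k)\<^sup>2" by (intro power_mono) auto
    with K[OF that] show False by (simp add: power2_eq_square)
  qed
  then show ?thesis using that by blast
qed

lemma per_xs:
  assumes fx: "H xs = xs" and sq: "summable (\<lambda>k. (eps k)\<^sup>2)"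
  shows "AE \<omega> in M. convergent (\<lambda>k. V xs k \<omega>) \<and> summable (\<lambda>k. eps k * (1 - eps k) * (norm (Tv k \<omega>))\<^sup>2)"
proof -
  obtain K where K: "\<And>k. k \<ge> K \<Longrightarrow> eps k \<le> 1 / 2" using eps_small[OF sq] by blast
  define v where "v k = (\<integral>\<omega>. V xs k \<omega> \<partial>M)" for k
  define zz where "zz k = (\<integral>\<omega>. (norm (z xs k \<omega>))\<^sup>2 \<partial>M)" for k
  have zzv: "zz k \<le> v k" if "k \<ge> K" for k
  proof -
    have "0 \<le> eps k * (1 - eps k) * (\<integral>\<omega>. (norm (Tv k \<omega>))\<^sup>2 \<partial>M)"
      using K[OF that] eps_pos[of k] by simp
    then show ?thesis using ER(2)[OF fx, of k] unfolding zz_def v_def by linarith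
  qed
  have vrec: "v (Suc k) \<le> v k + (eps k)\<^sup>2 * A" if "k \<ge> K" for k
    using ER(1)[OF fx, of k] zzv[OF that] unfolding zz_def v_def by linarith
  define B0 where "B0 = v K + A * (\<Sum>k. (eps k)\<^sup>2)"
  have vB: "v (K + n) \<le> v K + A * (\<Sum>k<K + n. (eps k)\<^sup>2)" for n
  proof (induction n)
    case 0
    have "0 \<le> (\<Sum>k<K. (eps k)\<^sup>2)" by (intro sum_nonneg) auto
    then show ?case using A_pos by simp
  next
    case (Suc n)
    have "v (K + Suc n) \<le> v (K + n) + (eps (K + n))\<^sup>2 * A" using vrec[of "K + n"] by simp
    also have "\<dots> \<le> v K + A * (\<Sum>k<K + n. (eps k)\<^sup>2) + (eps (K + n))\<^sup>2 * A" using Suc by simp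
    also have "\<dots> = v K + A * (\<Sum>k<K + Suc n. (eps k)\<^sup>2)" by (simp add: algebra_simps)
    finally show ?case .
  qed
  have vB0: "v k \<le> B0" if kK: "k \<ge> K" for k
  proof -
    obtain n where n: "k = K + n" using le_Suc_ex[OF kK] by blast
    have "(\<Sum>k<K + n. (eps k)\<^sup>2) \<le> (\<Sum>k. (eps k)\<^sup>2)" using sq by (intro sum_le_suminf) auto
    then have "A * (\<Sum>k<K + n. (eps k)\<^sup>2) \<le> A * (\<Sum>k. (eps k)\<^sup>2)"
      using A_pos by (intro mult_left_mono) auto
    then show ?thesis using vB[of n] unfolding n B0_def by linarith
  qed
  define B where "B = max B0 (Max (zz ` {..K}))"
  have zzB: "zz k \<le> B" for k
  proof (cases "k \<ge> K")
    case True then show ?thesis using zzv[OF True] vB0[OF True] unfolding B_def by linarith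
  next
    case False
    then have "zz k \<le> Max (zz ` {..K})" by (intro Max_ge) auto
    then show ?thesis unfolding B_def by linarith
  qed
  define c where "c k \<omega> = (2 * eps k) *\<^sub>R z xs k \<omega>" for k \<omega>
  have csq: "(norm (c k \<omega>))\<^sup>2 = 4 * (eps k)\<^sup>2 * (norm (z xs k \<omega>))\<^sup>2" for k \<omega>
    unfolding c_def using eps_pos[of k] by (simp add: power_mult_distrib)
  have ad: "adapted c"
    unfolding adapted_def
  proof (intro allI conjI)
    fix k
    show "c k \<in> borel_measurable (F k)" unfolding c_def[abs_def] by measurable
    show "integrable M (\<lambda>\<omega>. (norm (c k \<omega>))\<^sup>2)" unfolding csq using z_sq_int[OF fx, of k] by simp
  qed
  have sc: "summable (\<lambda>k. \<integral>\<omega>. (norm (c k \<omega>))\<^sup>2 \<partial>M)"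
  proof (rule summable_comparison_test'[where N=0])
    show "summable (\<lambda>k. 4 * B * (eps k)\<^sup>2)" using sq by (intro summable_mult)
    fix k
    have "(\<integral>\<omega>. (norm (c k \<omega>))\<^sup>2 \<partial>M) = 4 * (eps k)\<^sup>2 * zz k" unfolding csq zz_def by simp
    moreover have "4 * (eps k)\<^sup>2 * zz k \<le> 4 * (eps k)\<^sup>2 * B" using zzB[of k] by (intro mult_left_mono) auto
    moreover have "0 \<le> (\<integral>\<omega>. (norm (c k \<omega>))\<^sup>2 \<partial>M)" by simp
    ultimately show "norm (\<integral>\<omega>. (norm (c k \<omega>))\<^sup>2 \<partial>M) \<le> 4 * B * (eps k)\<^sup>2" by (simp add: algebra_simps)
  qed
  have AE1: "AE \<omega> in M. convergent (\<lambda>n. S c n \<omega>)" by (rule mg_conv[OF ad sc])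
  define q where "q k \<omega> = (eps k)\<^sup>2 * (norm (w k \<omega>))\<^sup>2" for k \<omega>
  have AE2: "AE \<omega> in M. summable (\<lambda>k. q k \<omega>)"
  proof (rule nn_as_summable)
    show "q k \<in> borel_measurable M" for k unfolding q_def[abs_def] using w_meas[of k] by measurable
    show "0 \<le> q k \<omega>" for k \<omega> unfolding q_def by simp
    show "integrable M (q k)" for k unfolding q_def[abs_def] using w_sq_int[of k] by simp
    show "summable (\<lambda>k. \<integral>\<omega>. q k \<omega> \<partial>M)"
    proof (rule summable_comparison_test'[where N=0])
      show "summable (\<lambda>k. A * (eps k)\<^sup>2)" using sq by (intro summable_mult)
      fix k
      have "(\<integral>\<omega>. q k \<omega> \<partial>M) = (eps k)\<^sup>2 * (\<integral>\<omega>. (norm (w k \<omega>))\<^sup>2 \<partial>M)" unfolding q_def by simp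
      moreover have "(eps k)\<^sup>2 * (\<integral>\<omega>. (norm (w k \<omega>))\<^sup>2 \<partial>M) \<le> (eps k)\<^sup>2 * A"
        using w_sq_exp[of k] by (intro mult_left_mono) auto
      moreover have "0 \<le> (\<integral>\<omega>. q k \<omega> \<partial>M)" unfolding q_def by simp
      ultimately show "norm (\<integral>\<omega>. q k \<omega> \<partial>M) \<le> A * (eps k)\<^sup>2" by (simp add: algebra_simps)
    qed
  qed
  show ?thesis using AE1 AE2
  proof (eventually_elim)
    case (elim \<omega>)
    have se: "summable (\<lambda>k. c k \<omega> \<bullet> w k \<omega> + q k \<omega>)"
    proof (rule summable_add)
      show "summable (\<lambda>k. c k \<omega> \<bullet> w k \<omega>)"
        using elim(1) unfolding S_def by (simp add: summable_iff_convergent)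
      show "summable (\<lambda>k. q k \<omega>)" using elim(2) .
    qed
    have rec: "V xs (Suc k) \<omega> \<le> V xs k \<omega> - eps k * (1 - eps k) * (norm (Tv k \<omega>))\<^sup>2 + (c k \<omega> \<bullet> w k \<omega> + q k \<omega>)" for k
    proof -
      have "c k \<omega> \<bullet> w k \<omega> = 2 * eps k * (z xs k \<omega> \<bullet> w k \<omega>)" unfolding c_def by simp
      then show ?thesis using V_Suc[of xs k \<omega>] z_le[OF fx, of k \<omega>] unfolding q_def by linarith
    qed
    have dpos: "0 \<le> eps k * (1 - eps k) * (norm (Tv k \<omega>))\<^sup>2" if "k \<ge> K" for k
      using K[OF that] eps_pos[of k] by simp
    show ?case using DL1[OF V_nonneg rec se dpos] .
  qed
qed

end


context km begin

lemma part_a: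
  assumes div: "filterlim (\<lambda>n. \<Sum>k<n. eps k) at_top sequentially"
    and sq: "summable (\<lambda>k. (eps k)\<^sup>2)" and ne: "{z. H z = z} \<noteq> {}"
  shows "AE \<omega> in M. (\<lambda>k. infdist (x k \<omega>) {z. H z = z}) \<longlonglongrightarrow> 0"
proof -
  obtain xs0 where xs0: "H xs0 = xs0" using ne by auto
  obtain Q where Q: "countable Q" "Q \<subseteq> {z. H z = z}" "{z. H z = z} \<subseteq> closure Q"
    by (rule separable)
  have Qne: "Q \<noteq> {}" using Q(3) ne by auto
  obtain K where K: "\<And>k. k \<ge> K \<Longrightarrow> eps k \<le> 1 / 2" using eps_small[OF sq] by blast
  have AEQ: "AE \<omega> in M. \<forall>q\<in>Q. convergent (\<lambda>k. V q k \<omega>)"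
  proof (rule AE_ball_countable'[OF _ Q(1)])
    fix q assume "q \<in> Q"
    then have "H q = q" using Q(2) by auto
    from per_xs[OF this sq] show "AE \<omega> in M. convergent (\<lambda>k. V q k \<omega>)" by (rule AE_mp) auto
  qed
  have AE0: "AE \<omega> in M. summable (\<lambda>k. eps k * (1 - eps k) * (norm (Tv k \<omega>))\<^sup>2)"
    using per_xs[OF xs0 sq] by (rule AE_mp) auto
  show ?thesis using AEQ AE0
  proof (eventually_elim)
    case (elim \<omega>)
    have conv: "convergent (\<lambda>k. norm (x k \<omega> - q))" if q: "q \<in> Q" for q
    proof -
      from elim(1) q obtain L where L: "(\<lambda>k. V q k \<omega>) \<longlonglongrightarrow> L" unfolding convergent_def by blast
      have "(\<lambda>k. sqrt (V q k \<omega>)) \<longlonglongrightarrow> sqrt L" by (rule tendsto_real_sqrt[OF L])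
      moreover have "(\<lambda>k. sqrt (V q k \<omega>)) = (\<lambda>k. norm (x k \<omega> - q))" by (simp add: V_def)
      ultimately show ?thesis unfolding convergent_def by auto
    qed
    have small: "\<exists>k\<ge>K0. norm (H (x k \<omega>) - x k \<omega>) < \<delta>" if d: "\<delta> > 0" for \<delta> K0
    proof (rule ccontr)
      assume "\<not> ?thesis"
      then have big: "\<And>k. k \<ge> K0 \<Longrightarrow> \<delta> \<le> norm (Tv k \<omega>)" by (auto simp: Tv_def not_less)
      have "summable eps"
      proof (rule summable_comparison_test'[where N="max K0 K"])
        show "summable (\<lambda>k. (2 / \<delta>\<^sup>2) * (eps k * (1 - eps k) * (norm (Tv k \<omega>))\<^sup>2))"
          using elim(2) by (rule summable_mult)
        fix k assume kk: "max K0 K \<le> k"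
        have e1: "1 / 2 \<le> 1 - eps k" using K[of k] kk by simp
        have t: "\<delta>\<^sup>2 \<le> (norm (Tv k \<omega>))\<^sup>2" using big[of k] kk d by (intro power_mono) auto
        have "eps k * (1 / 2) * \<delta>\<^sup>2 \<le> eps k * (1 - eps k) * (norm (Tv k \<omega>))\<^sup>2"
          using e1 t eps_pos[of k] d by (intro mult_mono) auto
        then have "eps k \<le> (2 / \<delta>\<^sup>2) * (eps k * (1 - eps k) * (norm (Tv k \<omega>))\<^sup>2)"
          using d by (simp add: field_simps)
        then show "norm (eps k) \<le> (2 / \<delta>\<^sup>2) * (eps k * (1 - eps k) * (norm (Tv k \<omega>))\<^sup>2)"
          using eps_pos[of k] by simp
      qed
      moreover have "\<not> summable eps" using div_not_summable[OF div] eps_pos less_imp_le by blast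
      ultimately show False by blast
    qed
    show ?case by (rule DL2[OF H_cont Q(2) Q(3) Qne conv small])
  qed
qed

end

theorem theorem2:
  fixes M :: "'a measure"
    and H :: "'v::euclidean_space \<Rightarrow> 'v"
    and x0 :: 'v
    and eps :: "nat \<Rightarrow> real"
    and w x :: "nat \<Rightarrow> 'a \<Rightarrow> 'v"
    and A :: real
  assumes M: "prob_space M"
    and nonexp: "\<And>u v. norm (H u - H v) \<le> norm (u - v)"
    and fix_ne: "{z. H z = z} \<noteq> {}"
    and fix_bdd: "bounded {z. H z = z}"
    and eps_pos: "\<And>k. eps k > 0"
    and w_meas: "\<And>k. w k \<in> borel_measurable M"
    and x_0: "x 0 = (\<lambda>\<omega>. x0)"
    and x_Suc: "\<And>k \<omega>. x (Suc k) \<omega> = x k \<omega> + eps k *\<^sub>R (H (x k \<omega>) - x k \<omega> + w k \<omega>)"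
    and w_mean: "\<And>k b. b \<in> Basis \<Longrightarrow>
        AE \<omega> in M. real_cond_exp M (nat_filtration M x w k) (\<lambda>\<eta>. w k \<eta> \<bullet> b) \<omega> = 0"
    and w_var: "\<And>k. AE \<omega> in M.
        nn_cond_exp M (nat_filtration M x w k) (\<lambda>\<eta>. ennreal ((norm (w k \<eta>))\<^sup>2)) \<omega> \<le> ennreal A"
    and A_pos: "A > 0"
  shows
   "let X = {z. H z = z};
        D = (SUP z\<in>X. norm (x0 - z));
        R = (\<lambda>k. Min ((\<lambda>i. integral\<^sup>L M (\<lambda>\<omega>. (norm (H (x i \<omega>) - x i \<omega>))\<^sup>2)) ` {0..k}))
    in ((filterlim (\<lambda>n. \<Sum>k<n. eps k) at_top sequentially \<and> summable (\<lambda>k. (eps k)\<^sup>2)) \<longrightarrow>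
          (AE \<omega> in M. ((\<lambda>k. infdist (x k \<omega>) X) \<longlongrightarrow> 0) sequentially))
     \<and> (\<forall>e. 0 < e \<and> e < 1 \<and> (\<forall>k. eps k = e) \<longrightarrow>
          (\<forall>k. R k \<le> D\<^sup>2 / ((real k + 1) * (1 - e) * e) + A * e / (1 - e)))
     \<and> (\<forall>e. 0 < e \<and> e < 1 \<and> (\<forall>k. eps k = e / sqrt (real k + 1)) \<longrightarrow>
          (\<forall>k\<ge>1. R k \<le> (D\<^sup>2 + A * e\<^sup>2 * (1 + ln (real k)))
                         / (2 * (1 - e) * e * (sqrt (real k + 1) - 1))))
     \<and> (\<forall>e. 0 < e \<and> e < 1 \<and> (\<forall>k. eps k = e / (real k + 1)) \<longrightarrow>
          (\<forall>k\<ge>1. R k \<le> (D\<^sup>2 + 2 * A * e\<^sup>2) / ((1 - e) * e) * (1 / ln (real k + 1))))"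
proof -
  interpret K: km M H x0 eps w x A
    by (rule km.intro[OF M nonexp eps_pos w_meas x_0 x_Suc w_mean w_var A_pos])
  define X where "X = {z. H z = z}"
  define D where "D = (SUP z\<in>X. norm (x0 - z))"
  obtain xs where xs: "H xs = xs" using fix_ne by auto
  obtain B where B: "\<And>z. z \<in> X \<Longrightarrow> norm z \<le> B" using fix_bdd unfolding X_def bounded_iff by auto
  have bdd: "bdd_above ((\<lambda>z. norm (x0 - z)) ` X)"
  proof (rule bdd_aboveI2)
    fix z assume "z \<in> X"
    then show "norm (x0 - z) \<le> norm x0 + B" using B norm_triangle_ineq4[of x0 z] by fastforce
  qed
  have ND: "norm (x0 - xs) \<le> D" unfolding D_def using xs bdd by (intro cSUP_upper) (auto simp: X_def)
  have N2: "(norm (x0 - xs))\<^sup>2 \<le> D\<^sup>2" using ND by (intro power_mono) auto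
  show ?thesis
    unfolding Let_def X_def[symmetric] D_def[symmetric]
  proof (intro conjI allI impI)
    assume "filterlim (\<lambda>n. \<Sum>k<n. eps k) at_top sequentially \<and> summable (\<lambda>k. (eps k)\<^sup>2)"
    then show "AE \<omega> in M. (\<lambda>k. infdist (x k \<omega>) X) \<longlonglongrightarrow> 0"
      using K.part_a fix_ne unfolding X_def by blast
  next
    fix e :: real and k :: nat assume h: "0 < e \<and> e < 1 \<and> (\<forall>k. eps k = e)"
    have "K.Rk k \<le> (norm (x0 - xs))\<^sup>2 / ((real k + 1) * (1 - e) * e) + A * e / (1 - e)"
      using K.part_b[OF xs] h by blast
    also have "\<dots> \<le> D\<^sup>2 / ((real k + 1) * (1 - e) * e) + A * e / (1 - e)"
      using N2 h by (intro add_right_mono divide_right_mono) auto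
    finally show "K.Rk k \<le> D\<^sup>2 / ((real k + 1) * (1 - e) * e) + A * e / (1 - e)" .
  next
    fix e :: real and k :: nat assume h: "0 < e \<and> e < 1 \<and> (\<forall>k. eps k = e / sqrt (real k + 1))" and k: "1 \<le> k"
    have "K.Rk k \<le> ((norm (x0 - xs))\<^sup>2 + A * e\<^sup>2 * (1 + ln (real k))) / (2 * (1 - e) * e * (sqrt (real k + 1) - 1))"
      using K.part_c[OF xs _ _ _ k] h by blast
    also have "\<dots> \<le> (D\<^sup>2 + A * e\<^sup>2 * (1 + ln (real k))) / (2 * (1 - e) * e * (sqrt (real k + 1) - 1))"
      using N2 h k by (intro add_right_mono divide_right_mono) auto
    finally show "K.Rk k \<le> (D\<^sup>2 + A * e\<^sup>2 * (1 + ln (real k))) / (2 * (1 - e) * e * (sqrt (real k + 1) - 1))" .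
  next
    fix e :: real and k :: nat assume h: "0 < e \<and> e < 1 \<and> (\<forall>k. eps k = e / (real k + 1))" and k: "1 \<le> k"
    have "K.Rk k \<le> ((norm (x0 - xs))\<^sup>2 + 2 * A * e\<^sup>2) / ((1 - e) * e) * (1 / ln (real k + 1))"
      using K.part_d[OF xs _ _ _ k] h by blast
    also have "\<dots> \<le> (D\<^sup>2 + 2 * A * e\<^sup>2) / ((1 - e) * e) * (1 / ln (real k + 1))"
      using N2 h k by (intro mult_right_mono add_right_mono divide_right_mono) auto
    finally show "K.Rk k \<le> (D\<^sup>2 + 2 * A * e\<^sup>2) / ((1 - e) * e) * (1 / ln (real k + 1))" .
  qed
qed

end
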